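(* Let $\mathbb K$ be an infinite field, $\mathcal N$ a vector space over $\mathbb K$, and $f:(\mathbb K^d)_{\mathrm{nc}}\to\mathcal N_{\mathrm{nc}}$ a nc function such that for each $n$, $f(X_1,\dots,X_d)$ is a polynomial function of degree $L_n$ in the $dn^2$ commuting variables $(X_i)_{jk}$ ($i=1,\dots,d$; $j,k=1,\dots,n$) with values in $\mathcal N^{n\times n}$ (with the convention $\deg0=-\infty$). Then there exists a unique sequence of homogeneous nc polynomials $f_j\in\mathcal N\langle x_1,\dots,x_d\rangle$ of degree $j$, $j=0,1,\dots$, such that for all $n\in\mathbb N$: $f_j$ vanishes on $(\mathbb K^{n\times n})^d$ for all $j>L_n$; if $L_n>-\infty$ then $f_{L_n}$ does not vanish identically on $(\mathbb K^{n\times n})^d$; and for $X\in(\mathbb K^{n\times n})^d$, $$f(X)=\sum_{j=0}^\infty f_j(X)=\sum_{j=0}^{L_n}f_j(X).$$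
   Context: $n\times n$ matrices over $\mathbb K^d$ are identified with $d$-tuples $X=(X_1,\dots,X_d)$ of $n\times n$ matrices over $\mathbb K$; $(\mathbb K^d)_{\mathrm{nc}}=\coprod_n(\mathbb K^{n\times n})^d$, $\mathcal N_{\mathrm{nc}}=\coprod_n\mathcal N^{n\times n}$. A nc function $f$ satisfies $f((\mathbb K^{n\times n})^d)\subseteq\mathcal N^{n\times n}$, $f(X\oplus Y)=f(X)\oplus f(Y)$ (componentwise block diagonal direct sums), and $f(SXS^{-1})=Sf(X)S^{-1}$ for invertible $S\in\mathbb K^{n\times n}$. $\mathcal G_d$ is the free monoid on $g_1,\dots,g_d$; for $w=g_{i_1}\cdots g_{i_\ell}$, $|w|=\ell$, $x^w=x_{i_1}\cdots x_{i_\ell}$, $X^w=X_{i_1}\cdots X_{i_\ell}$. A homogeneous nc polynomial of degree $j$ with coefficients in $\mathcal N$ is a finite formal sum $p=\sum_{|w|=j}p_wx^w$ with $p_w\in\mathcal N$ (possibly all zero); it is evaluated by $p(X)=\sum_{|w|=j}X^wp_w\in\mathcal N^{n\times n}$, where $(X^wp_w)_{ab}=(X^w)_{ab}p_w$. *)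

theory Defs
  imports Main "HOL.Vector_Spaces" "HOL-Library.Poly_Mapping"
begin

text \<open>An n x n matrix over a type 'a is a function nat => nat => 'a of which
only the entries (a,b) with a,b < n are relevant. A d-tuple of matrices X is a function
nat => nat => nat => 'k, X i being the i-th matrix (i < d). A nc function is a family
f n :: (nat => nat => nat => 'k) => (nat => nat => 'n), indexed by the size n.\<close>

definition idm :: "nat \<Rightarrow> nat \<Rightarrow> nat \<Rightarrow> 'k::{zero,one}" where
  "idm n a b = (if a = b \<and> a < n then 1 else 0)"

definition mmult :: "nat \<Rightarrow> (nat \<Rightarrow> nat \<Rightarrow> 'k::semiring_0) \<Rightarrow> (nat \<Rightarrow> nat \<Rightarrow> 'k) \<Rightarrow> nat \<Rightarrow> nat \<Rightarrow> 'k" where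
  "mmult n A B = (\<lambda>a b. \<Sum>c<n. A a c * B c b)"

definition minv :: "nat \<Rightarrow> (nat \<Rightarrow> nat \<Rightarrow> 'k::semiring_1) \<Rightarrow> (nat \<Rightarrow> nat \<Rightarrow> 'k) \<Rightarrow> bool" where
  "minv n S T = (\<forall>a<n. \<forall>b<n. mmult n S T a b = idm n a b \<and> mmult n T S a b = idm n a b)"

definition lact :: "('k \<Rightarrow> 'n \<Rightarrow> 'n) \<Rightarrow> nat \<Rightarrow> (nat \<Rightarrow> nat \<Rightarrow> 'k) \<Rightarrow> (nat \<Rightarrow> nat \<Rightarrow> 'n::comm_monoid_add) \<Rightarrow> nat \<Rightarrow> nat \<Rightarrow> 'n" where
  "lact sc n S M = (\<lambda>a b. \<Sum>c<n. sc (S a c) (M c b))"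

definition ract :: "('k \<Rightarrow> 'n \<Rightarrow> 'n) \<Rightarrow> nat \<Rightarrow> (nat \<Rightarrow> nat \<Rightarrow> 'n::comm_monoid_add) \<Rightarrow> (nat \<Rightarrow> nat \<Rightarrow> 'k) \<Rightarrow> nat \<Rightarrow> nat \<Rightarrow> 'n" where
  "ract sc n M T = (\<lambda>a b. \<Sum>c<n. sc (T c b) (M a c))"

definition blockdiag :: "nat \<Rightarrow> (nat \<Rightarrow> nat \<Rightarrow> 'a::zero) \<Rightarrow> (nat \<Rightarrow> nat \<Rightarrow> 'a) \<Rightarrow> nat \<Rightarrow> nat \<Rightarrow> 'a" where
  "blockdiag n A B = (\<lambda>a b. if a < n \<and> b < n then A a b
                            else if n \<le> a \<and> n \<le> b then B (a - n) (b - n) else 0)"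

definition nc_function :: "('k::field \<Rightarrow> 'n::ab_group_add \<Rightarrow> 'n) \<Rightarrow> nat \<Rightarrow>
    (nat \<Rightarrow> (nat \<Rightarrow> nat \<Rightarrow> nat \<Rightarrow> 'k) \<Rightarrow> nat \<Rightarrow> nat \<Rightarrow> 'n) \<Rightarrow> bool" where
  "nc_function sc d f \<longleftrightarrow>
     (\<forall>n m X Y. \<forall>a<n+m. \<forall>b<n+m.
        f (n + m) (\<lambda>i. blockdiag n (X i) (Y i)) a b = blockdiag n (f n X) (f m Y) a b) \<and>
     (\<forall>n S T X. minv n S T \<longrightarrow> (\<forall>a<n. \<forall>b<n.
        f n (\<lambda>i. mmult n (mmult n S (X i)) T) a b = ract sc n (lact sc n S (f n X)) T a b))"

text \<open>Commutative polynomials with coefficients in 'n in variables of type 'v,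
  as finitely supported maps from monomials (exponent vectors) to coefficients.\<close>
definition mdeg :: "('v \<Rightarrow>\<^sub>0 nat) \<Rightarrow> nat" where
  "mdeg \<alpha> = (\<Sum>v\<in>Poly_Mapping.keys \<alpha>. Poly_Mapping.lookup \<alpha> v)"

definition peval :: "('k::comm_semiring_1 \<Rightarrow> 'n \<Rightarrow> 'n) \<Rightarrow> (('v \<Rightarrow>\<^sub>0 nat) \<Rightarrow>\<^sub>0 'n::comm_monoid_add) \<Rightarrow> ('v \<Rightarrow> 'k) \<Rightarrow> 'n" where
  "peval sc P x = (\<Sum>\<alpha>\<in>Poly_Mapping.keys P. sc (\<Prod>v\<in>Poly_Mapping.keys \<alpha>. x v ^ Poly_Mapping.lookup \<alpha> v) (Poly_Mapping.lookup P \<alpha>))"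

definition mvars :: "nat \<Rightarrow> nat \<Rightarrow> (nat \<times> nat \<times> nat) set" where
  "mvars d n = {(i, j, k). i < d \<and> j < n \<and> k < n}"

text \<open>Degree of an n x n matrix of polynomials Q: None stands for -infinity (all entries zero).\<close>
definition mat_poly_degree :: "nat \<Rightarrow> (nat \<Rightarrow> nat \<Rightarrow> (('v \<Rightarrow>\<^sub>0 nat) \<Rightarrow>\<^sub>0 'n::zero)) \<Rightarrow> nat option \<Rightarrow> bool" where
  "mat_poly_degree n Q L = (case L of
      None \<Rightarrow> (\<forall>a<n. \<forall>b<n. Q a b = 0)
    | Some D \<Rightarrow> (\<forall>a<n. \<forall>b<n. \<forall>\<alpha>\<in>Poly_Mapping.keys (Q a b). mdeg \<alpha> \<le> D) \<and>
                (\<exists>a<n. \<exists>b<n. \<exists>\<alpha>\<in>Poly_Mapping.keys (Q a b). mdeg \<alpha> = D))"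

definition is_poly_fun_deg :: "('k::comm_semiring_1 \<Rightarrow> 'n \<Rightarrow> 'n) \<Rightarrow> nat \<Rightarrow> nat \<Rightarrow>
    ((nat \<Rightarrow> nat \<Rightarrow> nat \<Rightarrow> 'k) \<Rightarrow> nat \<Rightarrow> nat \<Rightarrow> 'n::comm_monoid_add) \<Rightarrow> nat option \<Rightarrow> bool" where
  "is_poly_fun_deg sc d n g L \<longleftrightarrow>
     (\<exists>Q. (\<forall>a<n. \<forall>b<n. \<forall>\<alpha>\<in>Poly_Mapping.keys (Q a b). Poly_Mapping.keys \<alpha> \<subseteq> mvars d n) \<and>
          mat_poly_degree n Q L \<and>
          (\<forall>X. \<forall>a<n. \<forall>b<n. g X a b = peval sc (Q a b) (\<lambda>(i, j, k). X i j k)))"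

text \<open>Words in the free monoid on g_0..g_{d-1} of length j, represented as lists of indices.
  A homogeneous nc polynomial of degree j is a coefficient function on words, zero off
  the words of length j.\<close>
definition words :: "nat \<Rightarrow> nat \<Rightarrow> nat list set" where
  "words d j = {w. length w = j \<and> set w \<subseteq> {..<d}}"

definition hom_ncpoly :: "nat \<Rightarrow> nat \<Rightarrow> (nat list \<Rightarrow> 'n::zero) \<Rightarrow> bool" where
  "hom_ncpoly d j p \<longleftrightarrow> (\<forall>w. w \<notin> words d j \<longrightarrow> p w = 0)"

definition matword :: "nat \<Rightarrow> (nat \<Rightarrow> nat \<Rightarrow> nat \<Rightarrow> 'k::semiring_1) \<Rightarrow> nat list \<Rightarrow> nat \<Rightarrow> nat \<Rightarrow> 'k" where
  "matword n X w = foldr (\<lambda>i M. mmult n (X i) M) w (idm n)"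

definition nceval :: "('k::semiring_1 \<Rightarrow> 'n \<Rightarrow> 'n) \<Rightarrow> nat \<Rightarrow> nat \<Rightarrow> nat \<Rightarrow> (nat list \<Rightarrow> 'n::comm_monoid_add) \<Rightarrow>
    (nat \<Rightarrow> nat \<Rightarrow> nat \<Rightarrow> 'k) \<Rightarrow> nat \<Rightarrow> nat \<Rightarrow> 'n" where
  "nceval sc d j n p X = (\<lambda>a b. \<Sum>w\<in>words d j. sc (matword n X w a b) (p w))"

definition nc_vanishes :: "('k::semiring_1 \<Rightarrow> 'n \<Rightarrow> 'n) \<Rightarrow> nat \<Rightarrow> nat \<Rightarrow> nat \<Rightarrow> (nat list \<Rightarrow> 'n::comm_monoid_add) \<Rightarrow> bool" where
  "nc_vanishes sc d j n p \<longleftrightarrow> (\<forall>X. \<forall>a<n. \<forall>b<n. nceval sc d j n p X a b = 0)"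

end

theory Submission
  imports Defs "HOL-Computational_Algebra.Polynomial"
begin

locale NC = Vector_Spaces.vector_space sc for sc :: "'k::field \<Rightarrow> 'n::ab_group_add \<Rightarrow> 'n" +
  assumes infK: "infinite (UNIV :: 'k set)"
begin

lemma exists_c_pow_neq:
  assumes "j < K"
  shows "\<exists>c::'k. c \<noteq> 0 \<and> c ^ j \<noteq> c ^ K"
proof -
  let ?p = "monom (1::'k) K - monom 1 j"
  have "coeff ?p K = 1" using assms by (auto simp: coeff_monom)
  hence "?p \<noteq> 0" by (metis coeff_0 zero_neq_one)
  hence fin: "finite {x. poly ?p x = 0}" by (rule poly_roots_finite)
  hence "finite (insert 0 {x. poly ?p x = 0})" by simp
  then obtain c where "c \<notin> insert 0 {x. poly ?p x = 0}"
    using infK by (metis ex_new_if_finite)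
  thus ?thesis by (auto simp: poly_monom)
qed

lemma vpoly_zero:
  "(\<And>t. t \<noteq> 0 \<Longrightarrow> (\<Sum>j\<le>K. sc (t ^ j) (v j)) = 0) \<Longrightarrow> j \<le> K \<Longrightarrow> v j = 0"
proof (induction K arbitrary: v j)
  case 0
  then show ?case using "0.prems"(1)[of 1] by simp
next
  case (Suc K)
  have low: "v i = 0" if iK: "i \<le> K" for i
  proof -
    obtain c :: 'k where c: "c \<noteq> 0" "c ^ i \<noteq> c ^ Suc K"
      using exists_c_pow_neq[of i "Suc K"] iK by (meson le_imp_less_Suc)
    have "(\<Sum>j\<le>K. sc (t ^ j) (sc (c ^ j - c ^ Suc K) (v j))) = 0" if t: "t \<noteq> 0" for t
    proof -
      have "(\<Sum>j\<le>Suc K. sc ((c*t) ^ j) (v j)) - sc (c ^ Suc K) (\<Sum>j\<le>Suc K. sc (t ^ j) (v j)) = 0"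
        using Suc.prems(1)[of "c*t"] Suc.prems(1)[of t] t c by simp
      moreover have "(\<Sum>j\<le>Suc K. sc ((c*t) ^ j) (v j)) - sc (c ^ Suc K) (\<Sum>j\<le>Suc K. sc (t ^ j) (v j))
          = (\<Sum>j\<le>Suc K. sc (t ^ j) (sc (c ^ j - c ^ Suc K) (v j)))"
        unfolding scale_sum_right sum_subtractf[symmetric] scale_scale scale_left_diff_distrib[symmetric]
        by (rule sum.cong) (simp_all add: power_mult_distrib algebra_simps del: power_Suc)
      moreover have "(\<Sum>j\<le>Suc K. sc (t ^ j) (sc (c ^ j - c ^ Suc K) (v j)))
          = (\<Sum>j\<le>K. sc (t ^ j) (sc (c ^ j - c ^ Suc K) (v j)))"
        by simp
      ultimately show ?thesis by simp
    qed
    from Suc.IH[OF this iK] c show ?thesis by simp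
  qed
  have "v (Suc K) = 0"
    using Suc.prems(1)[of 1] low by simp
  with low Suc.prems(2) show ?case by (metis le_SucE)
qed

lemma vpoly_eq:
  assumes "\<And>t. t \<noteq> 0 \<Longrightarrow> (\<Sum>j\<le>K. sc (t ^ j) (v j)) = (\<Sum>j\<le>K. sc (t ^ j) (w j))" "j \<le> K"
  shows "v j = w j"
proof -
  have "(\<lambda>j. v j - w j) j = 0"
  proof (rule vpoly_zero[where K=K and v="\<lambda>j. v j - w j"])
    fix t :: 'k assume "t \<noteq> 0"
    thus "(\<Sum>j\<le>K. sc (t ^ j) ((\<lambda>j. v j - w j) j)) = 0"
      using assms(1)[of t] by (simp add: scale_right_diff_distrib sum_subtractf)
  qed (rule assms(2))
  thus ?thesis by simp
qed

lemma vpoly_at0: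
  assumes "\<And>t. t \<noteq> 0 \<Longrightarrow> (\<Sum>j\<le>K. sc (t ^ j) (v j)) = C"
  shows "v 0 = C"
proof -
  have "v 0 = (if (0::nat) = 0 then C else 0)"
    apply (rule vpoly_eq[where K=K and v=v and w="\<lambda>j. if j = 0 then C else 0" and j=0])
    using assms by (simp_all add: if_distrib sum.delta cong: if_cong)
  thus ?thesis by simp
qed

end

lemma sum_lessThan_add: "(\<Sum>c<n+(m::nat). g c) = (\<Sum>c<n. g c) + (\<Sum>c<m. g (n+c))"
  by (induction m) (simp_all add: add.assoc)

lemma sum_lessThan_mult: "(\<Sum>c<k*(n::nat). g c) = (\<Sum>p<k. \<Sum>a<n. g (p*n+a))"
proof (induction k)
  case (Suc k)
  have "Suc k * n = k*n + n" by simp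
  then show ?case by (simp only: sum_lessThan_add Suc.IH sum.lessThan_Suc)
qed simp

locale NCH = NC sc for sc :: "'k::field \<Rightarrow> 'n::ab_group_add \<Rightarrow> 'n" +
  fixes d :: nat and h :: "nat \<Rightarrow> (nat \<Rightarrow> nat \<Rightarrow> nat \<Rightarrow> 'k) \<Rightarrow> nat \<Rightarrow> nat \<Rightarrow> 'n"
  assumes nc: "nc_function sc d h"
    and loc: "\<And>n X X' a b. (\<And>i a b. i < d \<Longrightarrow> a < n \<Longrightarrow> b < n \<Longrightarrow> X i a b = X' i a b) \<Longrightarrow>
               a < n \<Longrightarrow> b < n \<Longrightarrow> h n X a b = h n X' a b"
begin

lemma nc_dsum: "a < n+m \<Longrightarrow> b < n+m \<Longrightarrow>
   h (n+m) (\<lambda>i. blockdiag n (X i) (Y i)) a b = blockdiag n (h n X) (h m Y) a b"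
  by (rule nc[unfolded nc_function_def, THEN conjunct1, rule_format])

lemma nc_sim: "minv n S T \<Longrightarrow> a < n \<Longrightarrow> b < n \<Longrightarrow>
   h n (\<lambda>i. mmult n (mmult n S (X i)) T) a b = ract sc n (lact sc n S (h n X)) T a b"
  by (rule nc[unfolded nc_function_def, THEN conjunct2, rule_format])

definition elm :: "nat \<Rightarrow> nat \<Rightarrow> (nat \<Rightarrow> nat \<Rightarrow> 'k) \<Rightarrow> 'k \<Rightarrow> nat \<Rightarrow> nat \<Rightarrow> 'k" where
  "elm n m S \<sigma> a b = (if a = b then 1 else if n \<le> a \<and> b < n then \<sigma> * S (a-n) b else 0)"

lemma elm_left:
  assumes "a < n+m"
  shows "mmult (n+m) (elm n m S \<sigma>) M a c = (if a < n then M a c else M a c + \<sigma> * (\<Sum>e<n. S (a-n) e * M e c))"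
proof (cases "a < n")
  case True
  hence "mmult (n+m) (elm n m S \<sigma>) M a c = (\<Sum>e<n+m. if a = e then M e c else 0)"
    unfolding mmult_def elm_def by (intro sum.cong) auto
  also have "\<dots> = M a c" using assms by (simp add: sum.delta)
  finally show ?thesis using True by simp
next
  case False
  have "mmult (n+m) (elm n m S \<sigma>) M a c = (\<Sum>e<n. \<sigma> * S (a-n) e * M e c) + (\<Sum>e<m. if a = n + e then M (n+e) c else 0)"
    unfolding mmult_def sum_lessThan_add elm_def using False by (intro arg_cong2[where f="(+)"] sum.cong) auto
  also have "(\<Sum>e<m. if a = n + e then M (n+e) c else 0) = (\<Sum>e<m. if e = a - n then M a c else 0)"
    using False by (intro sum.cong) auto
  also have "\<dots> = M a c" using assms False by (simp add: sum.delta)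
  finally show ?thesis using False by (simp add: sum_distrib_left mult.assoc)
qed

lemma elm_right:
  assumes "b < n+m"
  shows "mmult (n+m) M (elm n m S \<sigma>) a b = (if b < n then M a b + \<sigma> * (\<Sum>c<m. M a (n+c) * S c b) else M a b)"
proof (cases "b < n")
  case True
  have "mmult (n+m) M (elm n m S \<sigma>) a b = (\<Sum>e<n. if e = b then M a b else 0) + (\<Sum>c<m. \<sigma> * (M a (n+c) * S c b))"
    unfolding mmult_def sum_lessThan_add elm_def using True by (intro arg_cong2[where f="(+)"] sum.cong) auto
  also have "(\<Sum>e<n. if e = b then M a b else 0) = M a b" using True by (simp add: sum.delta)
  finally show ?thesis using True by (simp add: sum_distrib_left)
next
  case False
  have "mmult (n+m) M (elm n m S \<sigma>) a b = (\<Sum>e<n+m. if e = b then M a b else 0)"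
    unfolding mmult_def elm_def using False by (intro sum.cong) auto
  also have "\<dots> = M a b" using assms by (simp add: sum.delta)
  finally show ?thesis using False by simp
qed

lemma lact_elm:
  assumes "a < n+m"
  shows "lact sc (n+m) (elm n m S \<sigma>) M a c = (if a < n then M a c else M a c + (\<Sum>e<n. sc (\<sigma> * S (a-n) e) (M e c)))"
proof (cases "a < n")
  case True
  hence "lact sc (n+m) (elm n m S \<sigma>) M a c = (\<Sum>e<n+m. if a = e then M e c else 0)"
    unfolding lact_def elm_def by (intro sum.cong) auto
  also have "\<dots> = M a c" using assms by (simp add: sum.delta)
  finally show ?thesis using True by simp
next
  case False
  have "lact sc (n+m) (elm n m S \<sigma>) M a c = (\<Sum>e<n. sc (\<sigma> * S (a-n) e) (M e c)) + (\<Sum>e<m. if a = n + e then M (n+e) c else 0)"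
    unfolding lact_def sum_lessThan_add elm_def using False by (intro arg_cong2[where f="(+)"] sum.cong) auto
  also have "(\<Sum>e<m. if a = n + e then M (n+e) c else 0) = (\<Sum>e<m. if e = a - n then M a c else 0)"
    using False by (intro sum.cong) auto
  also have "\<dots> = M a c" using assms False by (simp add: sum.delta less_diff_conv2)
  finally show ?thesis using False by (simp add: add.commute)
qed

lemma ract_elm:
  assumes "b < n+m"
  shows "ract sc (n+m) M (elm n m S \<sigma>) a b = (if b < n then M a b + (\<Sum>c<m. sc (\<sigma> * S c b) (M a (n+c))) else M a b)"
proof (cases "b < n")
  case True
  have "ract sc (n+m) M (elm n m S \<sigma>) a b = (\<Sum>e<n. if e = b then M a b else 0) + (\<Sum>c<m. sc (\<sigma> * S c b) (M a (n+c)))"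
    unfolding ract_def sum_lessThan_add elm_def using True by (intro arg_cong2[where f="(+)"] sum.cong) auto
  also have "(\<Sum>e<n. if e = b then M a b else 0) = M a b" using True by (simp add: sum.delta)
  finally show ?thesis using True by simp
next
  case False
  have "ract sc (n+m) M (elm n m S \<sigma>) a b = (\<Sum>e<n+m. if e = b then M a b else 0)"
    unfolding ract_def elm_def using False by (intro sum.cong) auto
  also have "\<dots> = M a b" using assms by (simp add: sum.delta)
  finally show ?thesis using False by simp
qed

lemma elm_minv: "minv (n+m) (elm n m S 1) (elm n m S (-1))"
proof -
  have 1: "mmult (n+m) (elm n m S \<sigma>) (elm n m S (-\<sigma>)) a b = idm (n+m) a b"
    if "a < n+m" "b < n+m" for a b and \<sigma> :: 'k
  proof -
    have s: "(\<Sum>e<n. S (a-n) e * elm n m S (-\<sigma>) e b) = (\<Sum>e<n. if e = b then S (a-n) b else 0)"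
      by (intro sum.cong) (auto simp: elm_def)
    show ?thesis using that unfolding elm_left[OF that(1)] s
      by (auto simp: sum.delta idm_def elm_def)
  qed
  show ?thesis unfolding minv_def using 1[of _ _ 1] 1[of _ _ "-1"] by simp
qed

lemma bd1: "e < n \<Longrightarrow> b < n \<Longrightarrow> blockdiag n A B e b = A e b"
  and bd2: "e < n \<Longrightarrow> blockdiag n A B e (n+c) = 0"
  and bd3: "blockdiag n A B (n+a) (n+c) = B a c"
  and bd4: "b < n \<Longrightarrow> blockdiag n A B (n+a) b = 0"
  by (auto simp: blockdiag_def)

lemma intertwine:
  assumes YS: "\<And>i a b. i < d \<Longrightarrow> a < m \<Longrightarrow> b < n \<Longrightarrow> (\<Sum>c<m. Y i a c * S c b) = (\<Sum>c<n. S a c * X i c b)"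
    and ab: "a < m" "b < n"
  shows "(\<Sum>c<m. sc (S c b) (h m Y a c)) = (\<Sum>c<n. sc (S a c) (h n X c b))"
proof -
  define Z where "Z = (\<lambda>i. blockdiag n (X i) (Y i))"
  define T where "T = elm n m S 1"
  define T' where "T' = elm n m S (-1)"
  have conj: "mmult (n+m) (mmult (n+m) T (Z i)) T' a' b' = Z i a' b'"
    if i: "i < d" and a': "a' < n+m" and b': "b' < n+m" for i a' b'
  proof -
    define P where "P = mmult (n+m) T (Z i)"
    have P: "P a' c' = (if a' < n then Z i a' c' else Z i a' c' + (\<Sum>e<n. S (a'-n) e * Z i e c'))" for c'
      unfolding P_def T_def using elm_left[OF a'] by simp
    have R: "mmult (n+m) P T' a' b' = (if b' < n then P a' b' - (\<Sum>c<m. P a' (n+c) * S c b') else P a' b')"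
      unfolding T'_def using elm_right[OF b'] by (simp add: sum_negf)
    have "mmult (n+m) P T' a' b' = Z i a' b'"
    proof (cases "a' < n")
      case True
      have "(\<Sum>c<m. P a' (n+c) * S c b') = 0"
        using True by (simp add: P Z_def bd2)
      thus ?thesis using R True P by simp
    next
      case False
      then obtain a2 where a2: "a' = n + a2" by (metis le_Suc_ex not_less)
      have a2m: "a2 < m" using a' a2 by simp
      have Pn: "P a' (n+c) = Y i a2 c" for c
      proof -
        have "(\<Sum>e<n. S (a'-n) e * Z i e (n+c)) = 0" by (simp add: Z_def bd2)
        thus ?thesis using P[of "n+c"] a2 by (simp add: Z_def bd3)
      qed
      show ?thesis
      proof (cases "b' < n")
        case True
        have "(\<Sum>e<n. S (a'-n) e * Z i e b') = (\<Sum>e<n. S a2 e * X i e b')"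
          using True a2 by (intro sum.cong) (simp_all add: Z_def bd1)
        hence "P a' b' = (\<Sum>e<n. S a2 e * X i e b')"
          using P[of b'] True a2 False by (simp add: Z_def bd4)
        moreover have "(\<Sum>c<m. P a' (n+c) * S c b') = (\<Sum>c<m. Y i a2 c * S c b')"
          by (simp add: Pn)
        ultimately show ?thesis using R True YS[OF i a2m True] a2 by (simp add: Z_def bd4)
      next
        case False
        then obtain b2 where b2: "b' = n + b2" by (metis le_Suc_ex not_less)
        have "(\<Sum>c<m. P a' (n+c) * S c b') = (\<Sum>c<m. P a' (n+c) * S c b')" ..
        show ?thesis using R False b2 Pn a2 by (simp add: Z_def bd3)
      qed
    qed
    thus ?thesis by (simp add: P_def)
  qed
  let ?H = "h (n+m) Z"
  have na: "n + a < n + m" and bn: "b < n + m" using ab by simp_all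
  have "h (n+m) (\<lambda>i. mmult (n+m) (mmult (n+m) T (Z i)) T') (n+a) b = ?H (n+a) b"
    by (rule loc) (use conj na bn in auto)
  also have "\<dots> = 0" unfolding Z_def using nc_dsum[OF na bn] ab by (simp add: bd4)
  finally have 0: "ract sc (n+m) (lact sc (n+m) T ?H) T' (n+a) b = 0"
    using nc_sim[OF elm_minv na bn, where X=Z] unfolding T_def T'_def by simp
  have Hn: "?H e b = h n X e b" if "e < n" for e
    using nc_dsum[of e n m b] that ab unfolding Z_def by (simp add: bd1)
  have Hnn: "?H (n+a) (n+c) = h m Y a c" if "c < m" for c
    using nc_dsum[of "n+a" n m "n+c"] that ab unfolding Z_def by (simp add: bd3)
  have Hz1: "?H (n+a) b = 0"
    using nc_dsum[OF na bn] ab unfolding Z_def by (simp add: bd4)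
  have Hz2: "?H e (n+c) = 0" if "e < n" "c < m" for e c
    using nc_dsum[of e n m "n+c"] that ab unfolding Z_def by (simp add: bd2)
  define M where "M = lact sc (n+m) T ?H"
  have M: "M (n+a) c' = ?H (n+a) c' + (\<Sum>e<n. sc (S a e) (?H e c'))" if "c' < n+m" for c'
    unfolding M_def T_def using lact_elm[OF na] by simp
  have M1: "M (n+a) b = (\<Sum>e<n. sc (S a e) (h n X e b))"
    using M[OF bn] Hz1 Hn by simp
  have M2: "M (n+a) (n+c) = h m Y a c" if "c < m" for c
  proof -
    have "(\<Sum>e<n. sc (S a e) (?H e (n+c))) = 0" using Hz2 that by simp
    thus ?thesis using M[of "n+c"] that Hnn by simp
  qed
  have "ract sc (n+m) M T' (n+a) b = M (n+a) b + (\<Sum>c<m. sc (- S c b) (M (n+a) (n+c)))"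
    unfolding T'_def using ract_elm[OF bn] ab by simp
  also have "(\<Sum>c<m. sc (- S c b) (M (n+a) (n+c))) = - (\<Sum>c<m. sc (S c b) (h m Y a c))"
    by (simp add: M2 sum_negf)
  finally show ?thesis using 0 M1 unfolding M_def by simp
qed

end

lemma matword_Cons: "matword n X (i # w) = mmult n (X i) (matword n X w)"
  by (simp add: matword_def)

lemma matword_Nil: "matword n X [] = idm n"
  by (simp add: matword_def)

definition Wd :: "nat \<Rightarrow> nat \<Rightarrow> nat list set" where
  "Wd d j = {w. set w \<subseteq> {..<d} \<and> length w \<le> j}"

definition Mdim :: "nat \<Rightarrow> nat \<Rightarrow> nat" where "Mdim d j = card (Wd d j)"

definition enc :: "nat \<Rightarrow> nat \<Rightarrow> nat list \<Rightarrow> nat" where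
  "enc d j = (SOME e. bij_betw e (Wd d j) {..<Mdim d j})"

definition dec :: "nat \<Rightarrow> nat \<Rightarrow> nat \<Rightarrow> nat list" where
  "dec d j = inv_into (Wd d j) (enc d j)"

definition Lm :: "nat \<Rightarrow> nat \<Rightarrow> nat \<Rightarrow> nat \<Rightarrow> nat \<Rightarrow> 'k::{zero,one}" where
  "Lm d j i p q = (if i < d \<and> p < Mdim d j \<and> q < Mdim d j \<and> dec d j p = i # dec d j q then 1 else 0)"

lemma finite_Wd: "finite (Wd d j)"
  unfolding Wd_def using finite_lists_length_le[of "{..<d}" j] by simp

lemma bij_enc: "bij_betw (enc d j) (Wd d j) {..<Mdim d j}"
proof -
  have "\<exists>e. bij_betw e (Wd d j) {..<Mdim d j}"
    using ex_bij_betw_finite_nat[OF finite_Wd, of d j] unfolding Mdim_def by (simp add: atLeast0LessThan)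
  thus ?thesis unfolding enc_def by (rule someI_ex)
qed

lemma dec_enc: "w \<in> Wd d j \<Longrightarrow> dec d j (enc d j w) = w"
  unfolding dec_def using bij_enc by (metis bij_betw_inv_into_left)

lemma enc_dec: "p < Mdim d j \<Longrightarrow> enc d j (dec d j p) = p"
  unfolding dec_def using bij_enc by (metis bij_betw_inv_into_right lessThan_iff)

lemma dec_in: "p < Mdim d j \<Longrightarrow> dec d j p \<in> Wd d j"
  unfolding dec_def using bij_enc by (metis bij_betw_def inv_into_into lessThan_iff)

lemma enc_lt: "w \<in> Wd d j \<Longrightarrow> enc d j w < Mdim d j"
  using bij_enc by (metis bij_betwE lessThan_iff)

lemma Nil_Wd: "[] \<in> Wd d j" by (simp add: Wd_def)

definition nilp :: "nat \<Rightarrow> nat \<Rightarrow> nat \<Rightarrow> (nat \<Rightarrow> nat \<Rightarrow> nat \<Rightarrow> 'k::semiring_1) \<Rightarrow> bool" where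
  "nilp d j n X \<longleftrightarrow> (\<forall>u. length u = Suc j \<longrightarrow> set u \<subseteq> {..<d} \<longrightarrow> (\<forall>a<n. \<forall>b<n. matword n X u a b = 0))"

context NCH begin

lemma model0:
  assumes nil: "nilp d j n X" and ab: "a < n" "b < n"
  shows "h n X a b = (\<Sum>u\<in>Wd d j. sc (matword n X u a b) (h (Mdim d j) (Lm d j) (enc d j u) (enc d j [])))"
proof -
  define M where "M = Mdim d j"
  define S where "S = (\<lambda>c q. matword n X (dec d j q) c b)"
  have YS: "(\<Sum>c<n. X i a' c * S c q) = (\<Sum>p<M. S a' p * Lm d j i p q)"
    if i: "i < d" and a': "a' < n" and q: "q < M" for i a' q
  proof -
    have L: "(\<Sum>c<n. X i a' c * S c q) = matword n X (i # dec d j q) a' b"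
      by (simp add: S_def matword_Cons mmult_def)
    have dq: "dec d j q \<in> Wd d j" using dec_in q M_def by simp
    show ?thesis
    proof (cases "length (dec d j q) < j")
      case True
      hence iw: "i # dec d j q \<in> Wd d j" using dq i by (auto simp: Wd_def)
      have "(\<Sum>p<M. S a' p * Lm d j i p q) = (\<Sum>p<M. if p = enc d j (i # dec d j q) then S a' p else 0)"
      proof (intro sum.cong refl)
        fix p assume "p \<in> {..<M}"
        hence p: "p < M" by simp
        have "(dec d j p = i # dec d j q) = (p = enc d j (i # dec d j q))"
          using p M_def dec_enc[OF iw] enc_dec by metis
        thus "S a' p * Lm d j i p q = (if p = enc d j (i # dec d j q) then S a' p else 0)"
          using p q i unfolding Lm_def M_def by simp
      qed
      also have "\<dots> = S a' (enc d j (i # dec d j q))"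
        using enc_lt[OF iw] M_def by (simp add: sum.delta)
      also have "\<dots> = matword n X (i # dec d j q) a' b" by (simp add: S_def dec_enc[OF iw])
      finally show ?thesis using L by simp
    next
      case False
      hence len: "length (i # dec d j q) = Suc j" using dq by (simp add: Wd_def)
      have "set (i # dec d j q) \<subseteq> {..<d}" using dq i by (simp add: Wd_def)
      hence "matword n X (i # dec d j q) a' b = 0" using nil len a' ab unfolding nilp_def by blast
      moreover have "Lm d j i p q = 0" if "p < M" for p
      proof -
        have "dec d j p \<in> Wd d j" using dec_in that M_def by simp
        hence "dec d j p \<noteq> i # dec d j q" using len by (auto simp: Wd_def)
        thus ?thesis by (simp add: Lm_def)
      qed
      ultimately show ?thesis using L by (metis (no_types, lifting) lessThan_iff mult_zero_right sum.neutral)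
    qed
  qed
  have e0: "enc d j [] < M" using enc_lt[OF Nil_Wd] M_def by simp
  have "(\<Sum>c<n. sc (S c (enc d j [])) (h n X a c)) = (\<Sum>c<M. sc (S a c) (h M (Lm d j) c (enc d j [])))"
    by (rule intertwine[where Y=X and X="Lm d j"]) (use YS ab e0 in auto)
  moreover have "(\<Sum>c<n. sc (S c (enc d j [])) (h n X a c)) = h n X a b"
  proof -
    have "(\<Sum>c<n. sc (S c (enc d j [])) (h n X a c)) = (\<Sum>c<n. if c = b then h n X a b else 0)"
      by (intro sum.cong) (auto simp: S_def dec_enc[OF Nil_Wd] matword_Nil idm_def)
    thus ?thesis using ab by (simp add: sum.delta)
  qed
  moreover have "(\<Sum>c<M. sc (S a c) (h M (Lm d j) c (enc d j []))) =
      (\<Sum>u\<in>Wd d j. sc (matword n X u a b) (h M (Lm d j) (enc d j u) (enc d j [])))"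
  proof -
    have "(\<Sum>u\<in>Wd d j. sc (matword n X u a b) (h M (Lm d j) (enc d j u) (enc d j []))) =
        (\<Sum>u\<in>Wd d j. sc (S a (enc d j u)) (h M (Lm d j) (enc d j u) (enc d j [])))"
      by (intro sum.cong) (auto simp: S_def dec_enc)
    also have "\<dots> = (\<Sum>c<M. sc (S a c) (h M (Lm d j) c (enc d j [])))"
      using sum.reindex_bij_betw[OF bij_enc, of "\<lambda>c. sc (S a c) (h M (Lm d j) c (enc d j []))"] M_def by simp
    finally show ?thesis by simp
  qed
  ultimately show ?thesis unfolding M_def by simp
qed

end

definition scaleX :: "'k::times \<Rightarrow> (nat \<Rightarrow> nat \<Rightarrow> nat \<Rightarrow> 'k) \<Rightarrow> nat \<Rightarrow> nat \<Rightarrow> nat \<Rightarrow> 'k" where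
  "scaleX t X = (\<lambda>i a b. t * X i a b)"

lemma matword_scale: "matword n (scaleX t X) u a b = t ^ length u * (matword n X u a b :: 'k::comm_semiring_1)"
proof (induction u arbitrary: a b)
  case Nil
  then show ?case by (simp add: matword_Nil)
next
  case (Cons i u)
  show ?case
    unfolding matword_Cons mmult_def Cons.IH by (simp add: scaleX_def sum_distrib_left algebra_simps)
qed

lemma nilp_scale: "nilp d j n X \<Longrightarrow> nilp d j n (scaleX t (X :: nat \<Rightarrow> nat \<Rightarrow> nat \<Rightarrow> 'k::comm_semiring_1))"
  unfolding nilp_def by (simp add: matword_scale)

lemma words_Wd: "words d j = {u \<in> Wd d j. length u = j}"
  by (auto simp: words_def Wd_def)

lemma finite_words: "finite (words d j)"
  using finite_Wd[of d j] by (simp add: words_Wd)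

locale NCHJ = NCH sc d h for sc :: "'k::field \<Rightarrow> 'n::ab_group_add \<Rightarrow> 'n" and d h +
  fixes j :: nat
  assumes hom: "\<And>n t X a b. a < n \<Longrightarrow> b < n \<Longrightarrow> h n (scaleX t X) a b = sc (t ^ j) (h n X a b)"
begin

definition cm :: "nat list \<Rightarrow> 'n" where
  "cm u = h (Mdim d j) (Lm d j) (enc d j u) (enc d j [])"

lemma model:
  assumes nil: "nilp d j n X" and ab: "a < n" "b < n"
  shows "h n X a b = (\<Sum>u\<in>words d j. sc (matword n X u a b) (cm u))"
proof -
  define v where "v k = (\<Sum>u\<in>{u \<in> Wd d j. length u = k}. sc (matword n X u a b) (cm u))" for k
  define w where "w k = (if k = j then h n X a b else 0)" for k
  have "v j = w j"
  proof (rule vpoly_eq[where K=j])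
    fix t :: 'k assume "t \<noteq> 0"
    have "(\<Sum>k\<le>j. sc (t ^ k) (v k)) = (\<Sum>k\<le>j. \<Sum>u\<in>{u \<in> Wd d j. length u = k}. sc (t ^ length u) (sc (matword n X u a b) (cm u)))"
      unfolding v_def scale_sum_right by (intro sum.cong refl) auto
    also have "\<dots> = (\<Sum>u\<in>Wd d j. sc (t ^ length u) (sc (matword n X u a b) (cm u)))"
      by (rule sum.group) (auto simp: finite_Wd Wd_def[symmetric], auto simp: Wd_def)
    also have "\<dots> = (\<Sum>u\<in>Wd d j. sc (matword n (scaleX t X) u a b) (cm u))"
      by (simp add: matword_scale)
    also have "\<dots> = h n (scaleX t X) a b"
      using model0[OF nilp_scale[OF nil] ab] unfolding cm_def by simp
    also have "\<dots> = sc (t ^ j) (h n X a b)" using hom ab by simp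
    also have "\<dots> = (\<Sum>k\<le>j. sc (t ^ k) (w k))"
      by (simp add: w_def if_distrib sum.delta cong: if_cong)
    finally show "(\<Sum>k\<le>j. sc (t ^ k) (v k)) = (\<Sum>k\<le>j. sc (t ^ k) (w k))" .
  qed simp
  thus ?thesis by (simp add: v_def w_def words_Wd)
qed

end

definition Tm :: "('k::field) \<Rightarrow> (nat \<Rightarrow> 'k) \<Rightarrow> nat \<Rightarrow> nat \<Rightarrow> 'k" where
  "Tm s cc p q = (if p = q then s * cc p else if q = Suc p then 1 else 0)"

definition Tp :: "nat \<Rightarrow> ('k::field) \<Rightarrow> (nat \<Rightarrow> 'k) \<Rightarrow> nat \<Rightarrow> nat \<Rightarrow> nat \<Rightarrow> 'k" where
  "Tp j s cc k = matword (Suc j) (\<lambda>_. Tm s cc) (replicate k 0)"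

lemma Tp_0: "Tp j s cc 0 = idm (Suc j)" by (simp add: Tp_def matword_Nil)

lemma Tp_Suc: "Tp j s cc (Suc k) = mmult (Suc j) (Tm s cc) (Tp j s cc k)"
  by (simp add: Tp_def matword_Cons)

lemma Tm_row:
  assumes "p < Suc j"
  shows "(\<Sum>r<Suc j. Tm s cc p r * v r) = s * cc p * v p + (if Suc p < Suc j then v (Suc p) else 0)"
proof -
  have "(\<Sum>r<Suc j. Tm s cc p r * v r) = (\<Sum>r<Suc j. (if r = p then s * cc p * v p else 0) + (if r = Suc p then v (Suc p) else 0))"
    by (intro sum.cong) (auto simp: Tm_def)
  also have "\<dots> = s * cc p * v p + (if Suc p < Suc j then v (Suc p) else 0)"
    using assms by (simp add: sum.distrib sum.delta)
  finally show ?thesis .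
qed

lemma Tp_top:
  assumes "p < Suc j" "q < Suc j"
  shows "(p + k < q \<longrightarrow> Tp j s cc k p q = 0) \<and> (q = p + k \<longrightarrow> Tp j s cc k p q = 1)"
  using assms
proof (induction k arbitrary: p)
  case 0
  then show ?case by (simp add: Tp_0 idm_def)
next
  case (Suc k)
  have eq: "Tp j s cc (Suc k) p q = s * cc p * Tp j s cc k p q + (if Suc p < Suc j then Tp j s cc k (Suc p) q else 0)"
    unfolding Tp_Suc mmult_def by (rule Tm_row[OF Suc.prems(1)])
  show ?case
  proof (intro conjI impI)
    assume "p + Suc k < q"
    thus "Tp j s cc (Suc k) p q = 0" using eq Suc.IH[of p] Suc.IH[of "Suc p"] Suc.prems by auto
  next
    assume q: "q = p + Suc k"
    hence "Suc p < Suc j" using Suc.prems by simp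
    thus "Tp j s cc (Suc k) p q = 1" using eq Suc.IH[of p] Suc.IH[of "Suc p"] Suc.prems q by auto
  qed
qed

lemma Tp_J:
  assumes "p < Suc j" "q < Suc j"
  shows "Tp j 0 cc k p q = (if q = p + k then 1 else 0)"
  using assms
proof (induction k arbitrary: p)
  case 0
  then show ?case by (simp add: Tp_0 idm_def)
next
  case (Suc k)
  have eq: "Tp j 0 cc (Suc k) p q = (if Suc p < Suc j then Tp j 0 cc k (Suc p) q else 0)"
    unfolding Tp_Suc mmult_def using Tm_row[OF Suc.prems(1), where s=0 and v="\<lambda>r. Tp j 0 cc k r q"] by simp
  show ?case using eq Suc.IH[of "Suc p"] Suc.prems by auto
qed

definition uv :: "('k::field) \<Rightarrow> (nat \<Rightarrow> 'k) \<Rightarrow> nat \<Rightarrow> nat \<Rightarrow> 'k" where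
  "uv s cc k q = (if q \<le> k then (\<Prod>l\<in>{q..<k}. inverse (s * (cc k - cc l))) else 0)"

lemma uv_eigen:
  assumes s: "s \<noteq> 0" and cc: "inj cc" and q: "q < Suc j" and k: "k < Suc j"
  shows "(\<Sum>r<Suc j. Tm s cc q r * uv s cc k r) = s * cc k * uv s cc k q"
proof -
  have e: "(\<Sum>r<Suc j. Tm s cc q r * uv s cc k r) = s * cc q * uv s cc k q + (if Suc q < Suc j then uv s cc k (Suc q) else 0)"
    by (rule Tm_row[OF q])
  consider "k < q" | "k = q" | "q < k" by linarith
  thus ?thesis
  proof cases
    case 1 thus ?thesis using e by (simp add: uv_def)
  next
    case 2 thus ?thesis using e by (simp add: uv_def)
  next
    case 3
    have ne: "cc k - cc q \<noteq> 0" using cc 3 by (simp add: inj_eq)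
    have split: "{q..<k} = insert q {Suc q..<k}" using 3 by auto
    have uq: "uv s cc k q = inverse (s * (cc k - cc q)) * uv s cc k (Suc q)"
      using 3 by (simp add: uv_def split)
    have "s * cc q * uv s cc k q + uv s cc k (Suc q) = s * cc k * uv s cc k q"
      using s ne by (simp add: uq field_simps)
    thus ?thesis using e 3 k by simp
  qed
qed

lemma Tp_eigen:
  assumes s: "s \<noteq> 0" and cc: "inj cc" and q: "q < Suc j" and k: "k < Suc j"
  shows "(\<Sum>r<Suc j. Tp j s cc e q r * uv s cc k r) = (s * cc k) ^ e * uv s cc k q"
  using q
proof (induction e arbitrary: q)
  case 0
  have "(\<Sum>r<Suc j. Tp j s cc 0 q r * uv s cc k r) = (\<Sum>r<Suc j. if r = q then uv s cc k q else 0)"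
    by (intro sum.cong) (auto simp: Tp_0 idm_def)
  then show ?case using 0 by (simp add: sum.delta)
next
  case (Suc e)
  have "(\<Sum>r<Suc j. Tp j s cc (Suc e) q r * uv s cc k r) = (\<Sum>r<Suc j. \<Sum>r'<Suc j. Tm s cc q r' * Tp j s cc e r' r * uv s cc k r)"
    unfolding Tp_Suc mmult_def sum_distrib_right by (rule refl)
  also have "\<dots> = (\<Sum>r'<Suc j. Tm s cc q r' * (\<Sum>r<Suc j. Tp j s cc e r' r * uv s cc k r))"
    by (subst sum.swap) (simp only: sum_distrib_left mult.assoc)
  also have "\<dots> = (\<Sum>r'<Suc j. Tm s cc q r' * ((s * cc k) ^ e * uv s cc k r'))"
    using Suc.IH by simp
  also have "\<dots> = (s * cc k) ^ e * (\<Sum>r'<Suc j. Tm s cc q r' * uv s cc k r')"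
    by (simp add: sum_distrib_left algebra_simps)
  also have "\<dots> = (s * cc k) ^ Suc e * uv s cc k q"
    using uv_eigen[OF s cc Suc.prems k] by simp
  finally show ?case .
qed

definition kron :: "nat \<Rightarrow> (nat \<Rightarrow> nat \<Rightarrow> 'k::times) \<Rightarrow> (nat \<Rightarrow> nat \<Rightarrow> 'k) \<Rightarrow> nat \<Rightarrow> nat \<Rightarrow> 'k" where
  "kron n A B c c' = A (c div n) (c' div n) * B (c mod n) (c' mod n)"

lemma kron_idx: "a < n \<Longrightarrow> b < n \<Longrightarrow> kron n A B (p*n+a) (q*n+b) = A p q * B a b"
  by (simp add: kron_def)

lemma idx_decomp: "(c::nat) = (c div n) * n + c mod n"
  by simp

lemma matword_kron:
  assumes "p < Suc j" "q < Suc j" "a < n" "b < n"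
  shows "matword (Suc j * n) (\<lambda>i. kron n T (X i)) u (p*n+a) (q*n+b) =
         matword (Suc j) (\<lambda>_. T) (replicate (length u) 0) p q * (matword n X u a b :: 'k::comm_semiring_1)"
  using assms(1,3)
proof (induction u arbitrary: p a)
  case Nil
  have "(p*n+a = q*n+b) = (p = q \<and> a = b)"
  proof
    assume "p*n+a = q*n+b"
    hence "(p*n+a) div n = (q*n+b) div n" "(p*n+a) mod n = (q*n+b) mod n" by simp_all
    thus "p = q \<and> a = b" using Nil assms by simp
  qed simp
  moreover have "p*n+a < Suc j * n"
  proof -
    have "p*n+a < p*n + n" using Nil by simp
    also have "\<dots> = Suc p * n" by simp
    also have "\<dots> \<le> Suc j * n" using Nil by (intro mult_right_mono) simp_all
    finally show ?thesis .
  qed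
  ultimately show ?case using Nil assms by (auto simp: matword_Nil idm_def)
next
  case (Cons i u)
  have "matword (Suc j * n) (\<lambda>i. kron n T (X i)) (i # u) (p*n+a) (q*n+b) =
      (\<Sum>r<Suc j. \<Sum>c<n. kron n T (X i) (p*n+a) (r*n+c) * matword (Suc j * n) (\<lambda>i. kron n T (X i)) u (r*n+c) (q*n+b))"
    unfolding matword_Cons mmult_def sum_lessThan_mult by (rule refl)
  also have "\<dots> = (\<Sum>r<Suc j. \<Sum>c<n. (T p r * matword (Suc j) (\<lambda>_. T) (replicate (length u) 0) r q) * (X i a c * matword n X u c b))"
  proof (intro sum.cong refl)
    fix r c assume "r \<in> {..<Suc j}" "c \<in> {..<n}"
    hence rc: "r < Suc j" "c < n" by auto
    show "kron n T (X i) (p*n+a) (r*n+c) * matword (Suc j * n) (\<lambda>i. kron n T (X i)) u (r*n+c) (q*n+b) =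
        (T p r * matword (Suc j) (\<lambda>_. T) (replicate (length u) 0) r q) * (X i a c * matword n X u c b)"
      by (simp only: kron_idx[OF Cons.prems(2) rc(2)] Cons.IH[OF rc]) (simp add: ac_simps)
  qed
  also have "\<dots> = (\<Sum>r<Suc j. T p r * matword (Suc j) (\<lambda>_. T) (replicate (length u) 0) r q) * (\<Sum>c<n. X i a c * matword n X u c b)"
    by (simp only: sum_product)
  also have "\<dots> = matword (Suc j) (\<lambda>_. T) (replicate (length (i # u)) 0) p q * matword n X (i # u) a b"
    by (simp add: matword_Cons mmult_def)
  finally show ?case .
qed

context NC begin

definition ccK :: "nat \<Rightarrow> 'k" where "ccK = (SOME f. inj f)"

lemma inj_ccK: "inj ccK"
proof -
  obtain f :: "nat \<Rightarrow> 'k" where "inj f" using infinite_countable_subset[OF infK] by blast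
  thus ?thesis unfolding ccK_def using someI_ex[of inj] by blast
qed

lemma tri_solve:
  assumes eqs: "\<And>k. k < Suc j \<Longrightarrow> (\<Sum>r<Suc j. sc (U k r) (G r)) = 0"
    and diag: "\<And>k. U k k = 1" and up: "\<And>k r. k < r \<Longrightarrow> U k r = 0"
    and k: "k < Suc j"
  shows "G k = 0"
  using k
proof (induction k rule: less_induct)
  case (less k)
  have "(\<Sum>r<Suc j. sc (U k r) (G r)) = (\<Sum>r<Suc j. if r = k then G k else 0)"
  proof (intro sum.cong refl)
    fix r assume "r \<in> {..<Suc j}"
    consider "r < k" | "r = k" | "k < r" by linarith
    thus "sc (U k r) (G r) = (if r = k then G k else 0)"
      by cases (use less.IH[of r] less.prems diag up in auto)
  qed
  thus ?case using eqs[OF less.prems] less.prems by (simp add: sum.delta del: sum.lessThan_Suc)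
qed

end

locale NCHJP = NCHJ sc d h j for sc :: "'k::field \<Rightarrow> 'n::ab_group_add \<Rightarrow> 'n" and d h j +
  assumes pol: "\<And>n X0 X1 a b. a < n \<Longrightarrow> b < n \<Longrightarrow>
     \<exists>K w. \<forall>s. h n (\<lambda>i c c'. X0 i c c' + s * X1 i c c') a b = (\<Sum>k\<le>K. sc (s ^ k) (w k))"
begin

lemma step1:
  assumes ab: "a < n" "b < n" and s: "s \<noteq> 0"
  shows "h (Suc j * n) (\<lambda>i. kron n (Tm s ccK) (X i)) a (j*n+b) = h n X a b"
proof -
  define m where "m = Suc j * n"
  define Y where "Y = (\<lambda>i. kron n (Tm s ccK) (X i))"
  have aY: "a < m" using ab unfolding m_def by (metis le_add1 less_le_trans mult_Suc)
  define G where "G r = h m Y a (r*n+b) - sc (Tp j s ccK j 0 r) (h n X a b)" for r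
  have eqs: "(\<Sum>r<Suc j. sc (uv s ccK k r) (G r)) = 0" if k: "k < Suc j" for k
  proof -
    define lam where "lam = s * ccK k"
    define S where "S c b' = (if c mod n = b' then uv s ccK k (c div n) else 0)" for c b'
    have YS: "(\<Sum>c<m. Y i a' c * S c b') = (\<Sum>c<n. S a' c * scaleX lam X i c b')"
      if i: "i < d" and a': "a' < m" and b': "b' < n" for i a' b'
    proof -
      define p where "p = a' div n"
      define a0 where "a0 = a' mod n"
      have p: "p < Suc j" using a' unfolding m_def p_def by (simp add: less_mult_imp_div_less)
      have a0: "a0 < n" using b' unfolding a0_def by simp
      have a'e: "a' = p*n + a0" unfolding p_def a0_def by simp
      have "(\<Sum>c<m. Y i a' c * S c b') = (\<Sum>r<Suc j. \<Sum>c<n. Y i (p*n+a0) (r*n+c) * S (r*n+c) b')"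
        unfolding m_def sum_lessThan_mult a'e by (rule refl)
      also have "\<dots> = (\<Sum>r<Suc j. \<Sum>c<n. if c = b' then Tm s ccK p r * X i a0 b' * uv s ccK k r else 0)"
        by (intro sum.cong refl) (auto simp: Y_def kron_idx a0 S_def)
      also have "\<dots> = (\<Sum>r<Suc j. Tm s ccK p r * uv s ccK k r) * X i a0 b'"
        using b' by (simp add: sum.delta sum_distrib_right sum_distrib_left ac_simps del: sum.lessThan_Suc)
      also have "\<dots> = lam * uv s ccK k p * X i a0 b'"
        using uv_eigen[OF s inj_ccK p k] lam_def by simp
      finally have L: "(\<Sum>c<m. Y i a' c * S c b') = lam * uv s ccK k p * X i a0 b'" .
      have "(\<Sum>c<n. S a' c * scaleX lam X i c b') = (\<Sum>c<n. if c = a0 then uv s ccK k p * (lam * X i a0 b') else 0)"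
        by (intro sum.cong refl) (auto simp: S_def scaleX_def p_def a0_def)
      also have "\<dots> = lam * uv s ccK k p * X i a0 b'" using a0 by (simp add: sum.delta)
      finally show ?thesis using L by simp
    qed
    have I: "(\<Sum>c<m. sc (S c b) (h m Y a c)) = (\<Sum>c<n. sc (S a c) (h n (scaleX lam X) c b))"
      by (rule intertwine[OF YS aY ab(2)])
    have "(\<Sum>c<m. sc (S c b) (h m Y a c)) = (\<Sum>r<Suc j. \<Sum>c<n. sc (S (r*n+c) b) (h m Y a (r*n+c)))"
      unfolding m_def sum_lessThan_mult by (rule refl)
    also have "\<dots> = (\<Sum>r<Suc j. \<Sum>c<n. if c = b then sc (uv s ccK k r) (h m Y a (r*n+b)) else 0)"
      by (intro sum.cong refl) (auto simp: S_def)
    also have "\<dots> = (\<Sum>r<Suc j. sc (uv s ccK k r) (h m Y a (r*n+b)))"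
      using ab by (simp add: sum.delta)
    finally have L: "(\<Sum>c<m. sc (S c b) (h m Y a c)) = (\<Sum>r<Suc j. sc (uv s ccK k r) (h m Y a (r*n+b)))" .
    have "(\<Sum>c<n. sc (S a c) (h n (scaleX lam X) c b)) = (\<Sum>c<n. if c = a then sc (uv s ccK k 0) (h n (scaleX lam X) a b) else 0)"
      by (intro sum.cong refl) (use ab in \<open>auto simp: S_def\<close>)
    also have "\<dots> = sc (uv s ccK k 0) (h n (scaleX lam X) a b)" using ab by (simp add: sum.delta)
    also have "\<dots> = sc (lam ^ j * uv s ccK k 0) (h n X a b)" using hom ab by (simp add: mult.commute)
    finally have R: "(\<Sum>c<n. sc (S a c) (h n (scaleX lam X) c b)) = sc (lam ^ j * uv s ccK k 0) (h n X a b)" .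
    have T: "(\<Sum>r<Suc j. sc (uv s ccK k r) (sc (Tp j s ccK j 0 r) (h n X a b))) = sc (lam ^ j * uv s ccK k 0) (h n X a b)"
    proof -
      have "(\<Sum>r<Suc j. sc (uv s ccK k r) (sc (Tp j s ccK j 0 r) (h n X a b))) =
          sc (\<Sum>r<Suc j. Tp j s ccK j 0 r * uv s ccK k r) (h n X a b)"
        by (simp add: scale_sum_left mult.commute del: sum.lessThan_Suc)
      also have "\<dots> = sc (lam ^ j * uv s ccK k 0) (h n X a b)"
        using Tp_eigen[OF s inj_ccK _ k, of 0 j] lam_def by simp
      finally show ?thesis .
    qed
    show ?thesis unfolding G_def scale_right_diff_distrib sum_subtractf using I L R T by simp
  qed
  have "G j = 0"
    by (rule tri_solve[where U="uv s ccK", OF eqs]) (auto simp: uv_def)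
  moreover have "Tp j s ccK j 0 j = 1" using Tp_top[where p=0 and q=j and k=j and j=j and s=s and cc=ccK] by simp
  ultimately show ?thesis unfolding G_def m_def Y_def by simp
qed

lemma main_hom:
  assumes ab: "a < n" "b < n"
  shows "h n X a b = (\<Sum>w\<in>words d j. sc (matword n X w a b) (cm w))"
proof -
  define m where "m = Suc j * n"
  define Y0 where "Y0 = (\<lambda>i. kron n (Tm 0 ccK) (X i))"
  define Y1 where "Y1 = (\<lambda>i. kron n (\<lambda>p q. if p = q then ccK p else 0) (X i))"
  have Ys: "(\<lambda>i. kron n (Tm s ccK) (X i)) = (\<lambda>i c c'. Y0 i c c' + s * Y1 i c c')" for s
    by (auto simp: Y0_def Y1_def kron_def Tm_def fun_eq_iff ring_distribs)
  have aY: "a < m" using ab unfolding m_def by (metis le_add1 less_le_trans mult_Suc)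
  have jb: "j*n+b < m" using ab unfolding m_def by simp
  obtain K w where w: "\<And>s. h m (\<lambda>i c c'. Y0 i c c' + s * Y1 i c c') a (j*n+b) = (\<Sum>k\<le>K. sc (s ^ k) (w k))"
    using pol[OF aY jb] by blast
  have "w 0 = h n X a b"
  proof (rule vpoly_at0)
    fix t :: 'k assume "t \<noteq> 0"
    thus "(\<Sum>k\<le>K. sc (t ^ k) (w k)) = h n X a b"
      using step1[OF ab, of t X] w[of t] Ys[of t] unfolding m_def by simp
  qed
  moreover have "h m Y0 a (j*n+b) = w 0"
  proof -
    have "h m Y0 a (j*n+b) = (\<Sum>k\<le>K. sc (0 ^ k) (w k))" using w[of 0] by simp
    also have "\<dots> = (\<Sum>k\<le>K. if k = 0 then w 0 else 0)" by (intro sum.cong) auto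
    finally show ?thesis by (simp add: sum.delta)
  qed
  moreover have nil: "nilp d j m Y0"
    unfolding nilp_def
  proof (intro allI impI)
    fix u :: "nat list" and c c' assume u: "length u = Suc j" and c: "c < m" and c': "c' < m"
    have p: "c div n < Suc j" "c' div n < Suc j" using c c' unfolding m_def by (simp_all add: less_mult_imp_div_less)
    have r: "c mod n < n" "c' mod n < n" using ab by simp_all
    have "matword m Y0 u c c' = matword m Y0 u ((c div n)*n + c mod n) ((c' div n)*n + c' mod n)" by simp
    also have "\<dots> = Tp j 0 ccK (length u) (c div n) (c' div n) * matword n X u (c mod n) (c' mod n)"
      unfolding m_def Y0_def Tp_def by (rule matword_kron[OF p r])
    also have "\<dots> = 0" using Tp_J[OF p, of ccK "length u"] u p by simp
    finally show "matword m Y0 u c c' = 0" .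
  qed
  moreover have "h m Y0 a (j*n+b) = (\<Sum>w\<in>words d j. sc (matword n X w a b) (cm w))"
  proof -
    have "h m Y0 a (j*n+b) = (\<Sum>w\<in>words d j. sc (matword m Y0 w a (j*n+b)) (cm w))"
      by (rule model[OF nil aY jb])
    also have "\<dots> = (\<Sum>w\<in>words d j. sc (matword n X w a b) (cm w))"
    proof (intro sum.cong refl)
      fix u assume "u \<in> words d j"
      hence u: "length u = j" by (simp add: words_def)
      have "matword m Y0 u a (j*n+b) = matword m Y0 u (0*n+a) (j*n+b)" by simp
      also have "\<dots> = Tp j 0 ccK (length u) 0 j * matword n X u a b"
        unfolding m_def Y0_def Tp_def by (rule matword_kron) (use ab in simp_all)
      also have "\<dots> = matword n X u a b" using Tp_J[of 0 j j ccK "length u"] u by simp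
      finally show "sc (matword m Y0 u a (j*n+b)) (cm u) = sc (matword n X u a b) (cm u)" by simp
    qed
    finally show ?thesis .
  qed
  ultimately show ?thesis by simp
qed

end

definition mono :: "('v \<Rightarrow>\<^sub>0 nat) \<Rightarrow> ('v \<Rightarrow> 'k::comm_semiring_1) \<Rightarrow> 'k" where
  "mono \<alpha> x = (\<Prod>v\<in>Poly_Mapping.keys \<alpha>. x v ^ Poly_Mapping.lookup \<alpha> v)"

definition hpart :: "('k::comm_semiring_1 \<Rightarrow> 'n \<Rightarrow> 'n) \<Rightarrow> (('v \<Rightarrow>\<^sub>0 nat) \<Rightarrow>\<^sub>0 'n::comm_monoid_add) \<Rightarrow> nat \<Rightarrow> ('v \<Rightarrow> 'k) \<Rightarrow> 'n" where
  "hpart sc P j x = (\<Sum>\<alpha>\<in>{\<alpha> \<in> Poly_Mapping.keys P. mdeg \<alpha> = j}. sc (mono \<alpha> x) (Poly_Mapping.lookup P \<alpha>))"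

lemma peval_mono: "peval sc P x = (\<Sum>\<alpha>\<in>Poly_Mapping.keys P. sc (mono \<alpha> x) (Poly_Mapping.lookup P \<alpha>))"
  by (simp add: peval_def mono_def)

lemma mono_scale: "mono \<alpha> (\<lambda>v. t * x v) = t ^ mdeg \<alpha> * mono \<alpha> x"
  by (simp add: mono_def mdeg_def power_mult_distrib prod.distrib power_sum)

lemma mono_affine: "mono \<alpha> (\<lambda>v. x0 v + s * x1 v) = poly (\<Prod>v\<in>Poly_Mapping.keys \<alpha>. [:x0 v, x1 v:] ^ Poly_Mapping.lookup \<alpha> v) s"
  by (simp add: mono_def poly_prod)

lemma mono_local: "(\<And>v. v \<in> Poly_Mapping.keys \<alpha> \<Longrightarrow> x v = y v) \<Longrightarrow> mono \<alpha> x = mono \<alpha> y"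
  unfolding mono_def by (intro prod.cong) auto

lemma mono_over:
  assumes "Poly_Mapping.keys \<alpha> \<subseteq> V" "finite V"
  shows "mono \<alpha> x = (\<Prod>v\<in>V. x v ^ Poly_Mapping.lookup \<alpha> v)"
  unfolding mono_def using assms by (intro prod.mono_neutral_left) (auto simp: in_keys_iff)

context NC begin

lemma hpart_scale: "hpart sc P j (\<lambda>v. t * x v) = sc (t ^ j) (hpart sc P j x)"
  unfolding hpart_def scale_sum_right by (intro sum.cong refl) (auto simp: mono_scale)

lemma peval_hpart:
  assumes "\<And>\<alpha>. \<alpha> \<in> Poly_Mapping.keys P \<Longrightarrow> mdeg \<alpha> \<le> K"
  shows "peval sc P x = (\<Sum>j\<le>K. hpart sc P j x)"
  unfolding peval_mono hpart_def
  by (rule sum.group[symmetric]) (use assms in auto)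

lemma peval_scale:
  assumes "\<And>\<alpha>. \<alpha> \<in> Poly_Mapping.keys P \<Longrightarrow> mdeg \<alpha> \<le> K"
  shows "peval sc P (\<lambda>v. t * x v) = (\<Sum>j\<le>K. sc (t ^ j) (hpart sc P j x))"
  using peval_hpart[OF assms, where x="\<lambda>v. t * x v"] by (simp add: hpart_scale)

lemma hpart_local:
  assumes "\<And>\<alpha>. \<alpha> \<in> Poly_Mapping.keys P \<Longrightarrow> Poly_Mapping.keys \<alpha> \<subseteq> V" "\<And>v. v \<in> V \<Longrightarrow> x v = y v"
  shows "hpart sc P j x = hpart sc P j y"
  unfolding hpart_def using assms by (intro sum.cong refl arg_cong2[where f=sc] mono_local) auto

lemma sum_poly_expand:
  assumes "finite A"
  shows "\<exists>K w. \<forall>s. (\<Sum>\<alpha>\<in>A. sc (poly (P \<alpha>) s) (c \<alpha>)) = (\<Sum>k\<le>K. sc (s ^ k) (w k))"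
proof (intro exI allI)
  fix s :: 'k
  define K where "K = (\<Sum>\<alpha>\<in>A. degree (P \<alpha>))"
  have pe: "poly (P \<alpha>) s = (\<Sum>k\<le>K. coeff (P \<alpha>) k * s ^ k)" if "\<alpha> \<in> A" for \<alpha>
  proof -
    have "degree (P \<alpha>) \<le> K" unfolding K_def using assms that by (auto intro: member_le_sum)
    hence "(\<Sum>k\<le>degree (P \<alpha>). coeff (P \<alpha>) k * s ^ k) = (\<Sum>k\<le>K. coeff (P \<alpha>) k * s ^ k)"
      by (intro sum.mono_neutral_left) (auto simp: coeff_eq_0)
    thus ?thesis by (simp add: poly_altdef)
  qed
  have "(\<Sum>\<alpha>\<in>A. sc (poly (P \<alpha>) s) (c \<alpha>)) = (\<Sum>\<alpha>\<in>A. \<Sum>k\<le>K. sc (s ^ k) (sc (coeff (P \<alpha>) k) (c \<alpha>)))"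
    by (intro sum.cong refl) (simp add: pe scale_sum_left mult.commute)
  also have "\<dots> = (\<Sum>k\<le>K. sc (s ^ k) (\<Sum>\<alpha>\<in>A. sc (coeff (P \<alpha>) k) (c \<alpha>)))"
    by (subst sum.swap) (simp add: scale_sum_right)
  finally show "(\<Sum>\<alpha>\<in>A. sc (poly (P \<alpha>) s) (c \<alpha>)) = (\<Sum>k\<le>K. sc (s ^ k) ((\<lambda>k. \<Sum>\<alpha>\<in>A. sc (coeff (P \<alpha>) k) (c \<alpha>)) k))"
    by simp
qed

lemma hpart_affine:
  "\<exists>K w. \<forall>s. hpart sc P j (\<lambda>v. x0 v + s * x1 v) = (\<Sum>k\<le>K. sc (s ^ k) (w k))"
  unfolding hpart_def mono_affine by (rule sum_poly_expand) simp

lemma mpoly_zero: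
  "finite V \<Longrightarrow> finite A \<Longrightarrow> inj_on e A \<Longrightarrow> (\<forall>\<beta>\<in>A. \<forall>v. v \<notin> V \<longrightarrow> e \<beta> v = 0) \<Longrightarrow>
   (\<forall>x. (\<Sum>\<beta>\<in>A. sc (\<Prod>v\<in>V. x v ^ e \<beta> v) (c \<beta>)) = 0) \<Longrightarrow> \<alpha> \<in> A \<Longrightarrow> c \<alpha> = 0"
proof (induction V arbitrary: A e c \<alpha> rule: finite_induct)
  case empty
  have "\<beta> = \<alpha>" if b: "\<beta> \<in> A" for \<beta>
  proof -
    have "e \<beta> = e \<alpha>"
    proof
      fix v show "e \<beta> v = e \<alpha> v" using empty.prems(3) b empty.prems(5) by simp
    qed
    thus ?thesis using empty.prems(2) b empty.prems(5) by (meson inj_onD)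
  qed
  hence A: "A = {\<alpha>}" using empty.prems(5) by blast
  have "(\<Sum>\<beta>\<in>A. sc (\<Prod>v\<in>{}. (\<lambda>_. 0::'k) v ^ e \<beta> v) (c \<beta>)) = 0"
    using empty.prems(4) by (rule spec)
  thus ?case unfolding A by simp
next
  case (insert v0 V' A e c \<alpha>)
  define k0 where "k0 = e \<alpha> v0"
  define Ak where "Ak = {\<beta> \<in> A. e \<beta> v0 = k0}"
  define e' where "e' \<beta> = (e \<beta>)(v0 := 0)" for \<beta>
  have claim: "\<forall>x. (\<Sum>\<beta>\<in>Ak. sc (\<Prod>v\<in>V'. x v ^ e' \<beta> v) (c \<beta>)) = 0"
  proof
    fix x :: "'a \<Rightarrow> 'k"
    define g where "g \<beta> = (\<Prod>v\<in>V'. x v ^ e \<beta> v)" for \<beta>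
    define K where "K = (\<Sum>\<beta>\<in>A. e \<beta> v0)"
    define w where "w k = (\<Sum>\<beta>\<in>{\<beta> \<in> A. e \<beta> v0 = k}. sc (g \<beta>) (c \<beta>))" for k
    have "w k0 = 0"
    proof (rule vpoly_zero[where K=K])
      fix t :: 'k assume "t \<noteq> 0"
      have "(\<Sum>k\<le>K. sc (t ^ k) (w k)) = (\<Sum>k\<le>K. \<Sum>\<beta>\<in>{\<beta> \<in> A. e \<beta> v0 = k}. sc (t ^ e \<beta> v0 * g \<beta>) (c \<beta>))"
        unfolding w_def scale_sum_right by (intro sum.cong refl) auto
      also have "\<dots> = (\<Sum>\<beta>\<in>A. sc (t ^ e \<beta> v0 * g \<beta>) (c \<beta>))"
        by (rule sum.group) (use insert.prems(1) in \<open>auto simp: K_def intro: member_le_sum\<close>)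
      also have "\<dots> = (\<Sum>\<beta>\<in>A. sc (\<Prod>v\<in>insert v0 V'. (x(v0 := t)) v ^ e \<beta> v) (c \<beta>))"
      proof (intro sum.cong refl arg_cong2[where f=sc])
        fix \<beta> assume "\<beta> \<in> A"
        have "(\<Prod>v\<in>V'. (x(v0 := t)) v ^ e \<beta> v) = g \<beta>"
          unfolding g_def using insert.hyps by (intro prod.cong) auto
        thus "t ^ e \<beta> v0 * g \<beta> = (\<Prod>v\<in>insert v0 V'. (x(v0 := t)) v ^ e \<beta> v)"
          using insert.hyps by simp
      qed
      also have "\<dots> = 0" using insert.prems(4) by blast
      finally show "(\<Sum>k\<le>K. sc (t ^ k) (w k)) = 0" .
    next
      show "k0 \<le> K" unfolding K_def k0_def using insert.prems(1,5) by (auto intro: member_le_sum)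
    qed
    moreover have "(\<Sum>\<beta>\<in>Ak. sc (\<Prod>v\<in>V'. x v ^ e' \<beta> v) (c \<beta>)) = w k0"
      unfolding w_def Ak_def g_def e'_def using insert.hyps
      by (intro sum.cong refl arg_cong2[where f=sc] prod.cong) auto
    ultimately show "(\<Sum>\<beta>\<in>Ak. sc (\<Prod>v\<in>V'. x v ^ e' \<beta> v) (c \<beta>)) = 0" by simp
  qed
  show ?case
  proof (rule insert.IH[where A=Ak and e=e'])
    show "finite Ak" using insert.prems(1) unfolding Ak_def by simp
    show "inj_on e' Ak"
    proof (rule inj_onI)
      fix \<beta>1 \<beta>2 assume b: "\<beta>1 \<in> Ak" "\<beta>2 \<in> Ak" "e' \<beta>1 = e' \<beta>2"
      have "e \<beta>1 = e \<beta>2"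
      proof
        fix v
        show "e \<beta>1 v = e \<beta>2 v"
        proof (cases "v = v0")
          case True thus ?thesis using b unfolding Ak_def by simp
        next
          case False
          have "e' \<beta>1 v = e' \<beta>2 v" using b(3) by simp
          thus ?thesis using False unfolding e'_def by simp
        qed
      qed
      thus "\<beta>1 = \<beta>2" using insert.prems(2) b unfolding Ak_def by (auto dest: inj_onD)
    qed
    show "\<forall>\<beta>\<in>Ak. \<forall>v. v \<notin> V' \<longrightarrow> e' \<beta> v = 0"
      using insert.prems(3) unfolding Ak_def e'_def by auto
    show "\<forall>x. (\<Sum>\<beta>\<in>Ak. sc (\<Prod>v\<in>V'. x v ^ e' \<beta> v) (c \<beta>)) = 0" by (rule claim)
    show "\<alpha> \<in> Ak" using insert.prems(5) unfolding Ak_def k0_def by simp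
  qed
qed

lemma hpart_nonzero:
  assumes V: "\<And>\<beta>. \<beta> \<in> Poly_Mapping.keys P \<Longrightarrow> Poly_Mapping.keys \<beta> \<subseteq> V" "finite V"
    and \<alpha>: "\<alpha> \<in> Poly_Mapping.keys P" "mdeg \<alpha> = j"
  shows "\<exists>x. hpart sc P j x \<noteq> 0"
proof (rule ccontr)
  assume "\<not> (\<exists>x. hpart sc P j x \<noteq> 0)"
  hence z: "hpart sc P j x = 0" for x by simp
  have "Poly_Mapping.lookup P \<alpha> = 0"
  proof (rule mpoly_zero[where V=V and A="{\<beta> \<in> Poly_Mapping.keys P. mdeg \<beta> = j}" and e=Poly_Mapping.lookup])
    show "finite V" by fact
    show "finite {\<beta> \<in> Poly_Mapping.keys P. mdeg \<beta> = j}" by simp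
    show "inj_on Poly_Mapping.lookup {\<beta> \<in> Poly_Mapping.keys P. mdeg \<beta> = j}"
      by (intro inj_onI poly_mapping_eqI) simp
    show "\<forall>\<beta>\<in>{\<beta> \<in> Poly_Mapping.keys P. mdeg \<beta> = j}. \<forall>v. v \<notin> V \<longrightarrow> Poly_Mapping.lookup \<beta> v = 0"
    proof (intro ballI allI impI)
      fix \<beta> v assume "\<beta> \<in> {\<beta> \<in> Poly_Mapping.keys P. mdeg \<beta> = j}" "v \<notin> V"
      hence "v \<notin> Poly_Mapping.keys \<beta>" using V(1) by auto
      thus "Poly_Mapping.lookup \<beta> v = 0" by (simp add: in_keys_iff)
    qed
    show "\<forall>x. (\<Sum>\<beta>\<in>{\<beta> \<in> Poly_Mapping.keys P. mdeg \<beta> = j}. sc (\<Prod>v\<in>V. x v ^ Poly_Mapping.lookup \<beta> v) (Poly_Mapping.lookup P \<beta>)) = 0"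
    proof
      fix x
      have "(\<Sum>\<beta>\<in>{\<beta> \<in> Poly_Mapping.keys P. mdeg \<beta> = j}. sc (\<Prod>v\<in>V. x v ^ Poly_Mapping.lookup \<beta> v) (Poly_Mapping.lookup P \<beta>)) = hpart sc P j x"
        unfolding hpart_def
      proof (intro sum.cong refl)
        fix \<beta> assume "\<beta> \<in> {\<beta> \<in> Poly_Mapping.keys P. mdeg \<beta> = j}"
        hence "Poly_Mapping.keys \<beta> \<subseteq> V" using V(1) by simp
        thus "sc (\<Prod>v\<in>V. x v ^ Poly_Mapping.lookup \<beta> v) (Poly_Mapping.lookup P \<beta>) = sc (mono \<beta> x) (Poly_Mapping.lookup P \<beta>)"
          using mono_over[OF _ V(2), of \<beta> x] by simp
      qed
      thus "(\<Sum>\<beta>\<in>{\<beta> \<in> Poly_Mapping.keys P. mdeg \<beta> = j}. sc (\<Prod>v\<in>V. x v ^ Poly_Mapping.lookup \<beta> v) (Poly_Mapping.lookup P \<beta>)) = 0"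
        using z by simp
    qed
    show "\<alpha> \<in> {\<beta> \<in> Poly_Mapping.keys P. mdeg \<beta> = j}" using \<alpha> by simp
  qed
  thus False using \<alpha>(1) by (simp add: in_keys_iff)
qed

end

lemma var_scale: "(\<lambda>(i, p, q). scaleX t X i p q) = (\<lambda>v. t * (\<lambda>(i, p, q). X i p q) v)"
  by (rule ext) (auto simp: scaleX_def split: prod.split)

lemma var_affine: "(\<lambda>(i, p, q). X0 i p q + s * X1 i p q) = (\<lambda>v. (\<lambda>(i, p, q). X0 i p q) v + s * (\<lambda>(i, p, q). X1 i p q) v)"
  by (rule ext) (auto split: prod.split)

context NC begin

lemma ract_lact_lin:
  assumes "\<And>c e. c < n \<Longrightarrow> e < n \<Longrightarrow> M c e = (\<Sum>j\<le>K. sc (t ^ j) (G j c e))"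
  shows "ract sc n (lact sc n S M) T a b = (\<Sum>j\<le>K. sc (t ^ j) (ract sc n (lact sc n S (G j)) T a b))"
proof -
  have "ract sc n (lact sc n S M) T a b = (\<Sum>c<n. sc (T c b) (\<Sum>e<n. sc (S a e) (\<Sum>j\<le>K. sc (t ^ j) (G j e c))))"
    unfolding ract_def lact_def using assms by (intro sum.cong refl arg_cong2[where f=sc]) auto
  also have "\<dots> = (\<Sum>c<n. \<Sum>e<n. \<Sum>j\<le>K. sc (t ^ j) (sc (T c b) (sc (S a e) (G j e c))))"
    by (simp add: scale_sum_right ac_simps)
  also have "\<dots> = (\<Sum>c<n. \<Sum>j\<le>K. \<Sum>e<n. sc (t ^ j) (sc (T c b) (sc (S a e) (G j e c))))"
    by (rule sum.cong[OF refl], rule sum.swap)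
  also have "\<dots> = (\<Sum>j\<le>K. \<Sum>c<n. \<Sum>e<n. sc (t ^ j) (sc (T c b) (sc (S a e) (G j e c))))"
    by (rule sum.swap)
  also have "\<dots> = (\<Sum>j\<le>K. sc (t ^ j) (ract sc n (lact sc n S (G j)) T a b))"
    unfolding ract_def lact_def by (simp add: scale_sum_right)
  finally show ?thesis .
qed

end

locale NCF = NC sc for sc :: "'k::field \<Rightarrow> 'n::ab_group_add \<Rightarrow> 'n" +
  fixes d :: nat and f :: "nat \<Rightarrow> (nat \<Rightarrow> nat \<Rightarrow> nat \<Rightarrow> 'k) \<Rightarrow> nat \<Rightarrow> nat \<Rightarrow> 'n" and L :: "nat \<Rightarrow> nat option"
  assumes ncf: "nc_function sc d f" and pf: "\<forall>n. is_poly_fun_deg sc d n (f n) (L n)"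
begin

definition Qf :: "nat \<Rightarrow> nat \<Rightarrow> nat \<Rightarrow> ((nat \<times> nat \<times> nat) \<Rightarrow>\<^sub>0 nat) \<Rightarrow>\<^sub>0 'n" where
  "Qf n = (SOME Q. (\<forall>a<n. \<forall>b<n. \<forall>\<alpha>\<in>Poly_Mapping.keys (Q a b). Poly_Mapping.keys \<alpha> \<subseteq> mvars d n) \<and>
          mat_poly_degree n Q (L n) \<and>
          (\<forall>X. \<forall>a<n. \<forall>b<n. f n X a b = peval sc (Q a b) (\<lambda>(i, j, k). X i j k)))"

lemma Qf: "(\<forall>a<n. \<forall>b<n. \<forall>\<alpha>\<in>Poly_Mapping.keys (Qf n a b). Poly_Mapping.keys \<alpha> \<subseteq> mvars d n) \<and>
          mat_poly_degree n (Qf n) (L n) \<and>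
          (\<forall>X. \<forall>a<n. \<forall>b<n. f n X a b = peval sc (Qf n a b) (\<lambda>(i, j, k). X i j k))"
proof -
  have "is_poly_fun_deg sc d n (f n) (L n)" using pf by simp
  hence ex: "\<exists>Q. (\<forall>a<n. \<forall>b<n. \<forall>\<alpha>\<in>Poly_Mapping.keys (Q a b). Poly_Mapping.keys \<alpha> \<subseteq> mvars d n) \<and>
          mat_poly_degree n Q (L n) \<and>
          (\<forall>X. \<forall>a<n. \<forall>b<n. f n X a b = peval sc (Q a b) (\<lambda>(i, j, k). X i j k))"
    unfolding is_poly_fun_deg_def .
  show ?thesis unfolding Qf_def by (rule someI_ex[OF ex])
qed

definition Bd :: "nat \<Rightarrow> nat" where "Bd n = (case L n of None \<Rightarrow> 0 | Some D \<Rightarrow> D)"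

definition H :: "nat \<Rightarrow> nat \<Rightarrow> (nat \<Rightarrow> nat \<Rightarrow> nat \<Rightarrow> 'k) \<Rightarrow> nat \<Rightarrow> nat \<Rightarrow> 'n" where
  "H n j X a b = hpart sc (Qf n a b) j (\<lambda>(i, p, q). X i p q)"

lemmas Qf1 = Qf[THEN conjunct1] and Qf2 = Qf[THEN conjunct2, THEN conjunct1]
  and Qf3 = Qf[THEN conjunct2, THEN conjunct2]

lemma Qkeys: "a < n \<Longrightarrow> b < n \<Longrightarrow> \<alpha> \<in> Poly_Mapping.keys (Qf n a b) \<Longrightarrow> Poly_Mapping.keys \<alpha> \<subseteq> mvars d n"
  by (rule Qf1[rule_format])

lemma f_peval: "a < n \<Longrightarrow> b < n \<Longrightarrow> f n X a b = peval sc (Qf n a b) (\<lambda>(i, j, k). X i j k)"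
  by (rule Qf3[rule_format])

lemma Qdeg:
  assumes ab: "a < n" "b < n" and al: "\<alpha> \<in> Poly_Mapping.keys (Qf n a b)"
  shows "mdeg \<alpha> \<le> Bd n"
proof (cases "L n")
  case None
  have "\<forall>a<n. \<forall>b<n. Qf n a b = 0" using Qf2[of n] None unfolding mat_poly_degree_def by simp
  hence "Qf n a b = 0" using ab by simp
  thus ?thesis using al by simp
next
  case (Some D)
  have "\<forall>a<n. \<forall>b<n. \<forall>\<alpha>\<in>Poly_Mapping.keys (Qf n a b). mdeg \<alpha> \<le> D"
    using Qf2[of n] Some unfolding mat_poly_degree_def by simp
  thus ?thesis using ab al Some unfolding Bd_def by simp
qed

lemma Qnone: "L n = None \<Longrightarrow> a < n \<Longrightarrow> b < n \<Longrightarrow> Qf n a b = 0"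
proof -
  assume "L n = None" "a < n" "b < n"
  moreover have "L n = None \<Longrightarrow> \<forall>a<n. \<forall>b<n. Qf n a b = 0" using Qf2[of n] unfolding mat_poly_degree_def by simp
  ultimately show "Qf n a b = 0" by simp
qed

lemma f_scale:
  assumes "a < n" "b < n" "Bd n \<le> K"
  shows "f n (scaleX t X) a b = (\<Sum>j\<le>K. sc (t ^ j) (H n j X a b))"
  unfolding f_peval[OF assms(1,2)] H_def var_scale
proof (rule peval_scale)
  fix \<alpha> assume "\<alpha> \<in> Poly_Mapping.keys (Qf n a b)"
  thus "mdeg \<alpha> \<le> K" using Qdeg[OF assms(1,2)] assms(3) by (meson order_trans)
qed

lemma f_H:
  assumes "a < n" "b < n" "Bd n \<le> K"
  shows "f n X a b = (\<Sum>j\<le>K. H n j X a b)"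
proof -
  have "scaleX 1 X = X" by (simp add: scaleX_def)
  thus ?thesis using f_scale[OF assms, of 1 X] by simp
qed

lemma H_zero:
  assumes "a < n" "b < n" "Bd n < j"
  shows "H n j X a b = 0"
proof -
  have E: "{\<alpha> \<in> Poly_Mapping.keys (Qf n a b). mdeg \<alpha> = j} = {}"
  proof -
    have "mdeg \<alpha> \<noteq> j" if "\<alpha> \<in> Poly_Mapping.keys (Qf n a b)" for \<alpha>
      using Qdeg[OF assms(1,2) that] assms(3) by linarith
    thus ?thesis by blast
  qed
  show ?thesis unfolding H_def hpart_def E by simp
qed

lemma H_hom: "H n j (scaleX t X) a b = sc (t ^ j) (H n j X a b)"
  unfolding H_def var_scale by (rule hpart_scale)

lemma H_loc:
  assumes "\<And>i a b. i < d \<Longrightarrow> a < n \<Longrightarrow> b < n \<Longrightarrow> X i a b = X' i a b" "a < n" "b < n"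
  shows "H n j X a b = H n j X' a b"
  unfolding H_def
proof (rule hpart_local)
  show "\<And>\<alpha>. \<alpha> \<in> Poly_Mapping.keys (Qf n a b) \<Longrightarrow> Poly_Mapping.keys \<alpha> \<subseteq> mvars d n"
    using Qkeys assms by blast
  show "\<And>v. v \<in> mvars d n \<Longrightarrow> (case v of (i, p, q) \<Rightarrow> X i p q) = (case v of (i, p, q) \<Rightarrow> X' i p q)"
    using assms(1) by (auto simp: mvars_def)
qed

lemma H_pol: "\<exists>K w. \<forall>s. H n j (\<lambda>i c c'. X0 i c c' + s * X1 i c c') a b = (\<Sum>k\<le>K. sc (s ^ k) (w k))"
  unfolding H_def var_affine by (rule hpart_affine)

lemma H_nonzero:
  assumes "L n = Some D"
  shows "\<exists>X. \<exists>a<n. \<exists>b<n. H n D X a b \<noteq> 0"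
proof -
  have M: "mat_poly_degree n (Qf n) (Some D)" using Qf2[of n] assms by simp
  have "\<exists>a<n. \<exists>b<n. \<exists>\<alpha>\<in>Poly_Mapping.keys (Qf n a b). mdeg \<alpha> = D"
    using M[unfolded mat_poly_degree_def option.case] by (rule conjunct2)
  then obtain a b \<alpha> where ab: "a < n" "b < n" "\<alpha> \<in> Poly_Mapping.keys (Qf n a b)" "mdeg \<alpha> = D"
    by blast
  have fin: "finite (mvars d n)"
  proof -
    have "mvars d n \<subseteq> {..<d} \<times> {..<n} \<times> {..<n}" by (auto simp: mvars_def)
    thus ?thesis by (rule finite_subset) simp
  qed
  obtain x where x: "hpart sc (Qf n a b) D x \<noteq> 0"
    using hpart_nonzero[OF Qkeys[OF ab(1,2)] fin ab(3,4)] by blast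
  have "(\<lambda>(i, p, q). (\<lambda>i p q. x (i, p, q)) i p q) = x" by (rule ext) auto
  hence "H n D (\<lambda>i p q. x (i, p, q)) a b \<noteq> 0" unfolding H_def using x by simp
  thus ?thesis using ab by blast
qed

lemma f_dsum: "a < n+m \<Longrightarrow> b < n+m \<Longrightarrow>
   f (n+m) (\<lambda>i. blockdiag n (X i) (Y i)) a b = blockdiag n (f n X) (f m Y) a b"
  by (rule ncf[unfolded nc_function_def, THEN conjunct1, rule_format])

lemma f_sim: "minv n S T \<Longrightarrow> a < n \<Longrightarrow> b < n \<Longrightarrow>
   f n (\<lambda>i. mmult n (mmult n S (X i)) T) a b = ract sc n (lact sc n S (f n X)) T a b"
  by (rule ncf[unfolded nc_function_def, THEN conjunct2, rule_format])

lemma H_dsum: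
  assumes ab: "a < n+m" "b < n+m"
  shows "H (n+m) j (\<lambda>i. blockdiag n (X i) (Y i)) a b = blockdiag n (H n j X) (H m j Y) a b"
proof -
  define K where "K = Bd n + Bd m + Bd (n+m)"
  define Z where "Z = (\<lambda>i. blockdiag n (X i) (Y i))"
  have SZ: "scaleX t Z = (\<lambda>i. blockdiag n (scaleX t X i) (scaleX t Y i))" for t
    by (auto simp: scaleX_def blockdiag_def Z_def fun_eq_iff)
  have BD: "blockdiag n (f n (scaleX t X)) (f m (scaleX t Y)) a b = (\<Sum>j\<le>K. sc (t ^ j) (blockdiag n (H n j X) (H m j Y) a b))" for t
  proof (cases "a < n \<and> b < n")
    case True
    thus ?thesis using f_scale[of a n b K t X] by (simp add: blockdiag_def K_def)
  next
    case F: False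
    show ?thesis
    proof (cases "n \<le> a \<and> n \<le> b")
      case True
      have "a - n < m" "b - n < m" using ab True by linarith+
      thus ?thesis using f_scale[of "a-n" m "b-n" K t Y] F True by (simp add: blockdiag_def K_def)
    next
      case False
      have c1: "\<not> (a < n \<and> b < n)" "\<not> (n \<le> a \<and> n \<le> b)" using F False by auto
      show ?thesis unfolding blockdiag_def using c1 by (simp only: if_False) simp
    qed
  qed
  show ?thesis
  proof (cases "j \<le> K")
    case True
    show ?thesis unfolding Z_def[symmetric]
    proof (rule vpoly_eq[where K=K, OF _ True])
      fix t :: 'k assume "t \<noteq> 0"
      have "(\<Sum>j\<le>K. sc (t ^ j) (H (n+m) j Z a b)) = f (n+m) (scaleX t Z) a b"
        using f_scale[OF ab, of K t Z] by (simp add: K_def)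
      also have "\<dots> = blockdiag n (f n (scaleX t X)) (f m (scaleX t Y)) a b"
        unfolding SZ by (rule f_dsum[OF ab])
      finally show "(\<Sum>j\<le>K. sc (t ^ j) (H (n+m) j Z a b)) = (\<Sum>j\<le>K. sc (t ^ j) (blockdiag n (H n j X) (H m j Y) a b))"
        using BD by simp
    qed
  next
    case False
    have "H (n+m) j Z a b = 0" using H_zero[OF ab] False by (simp add: K_def)
    moreover have "blockdiag n (H n j X) (H m j Y) a b = 0"
    proof -
      have "a < n \<Longrightarrow> b < n \<Longrightarrow> H n j X a b = 0" using H_zero False by (simp add: K_def)
      moreover have "n \<le> a \<Longrightarrow> n \<le> b \<Longrightarrow> H m j Y (a-n) (b-n) = 0"
        using H_zero[of "a-n" m "b-n"] False ab by (simp add: K_def less_diff_conv2)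
      ultimately show ?thesis by (auto simp: blockdiag_def)
    qed
    ultimately show ?thesis unfolding Z_def by simp
  qed
qed

lemma H_sim:
  assumes ST: "minv n S T" and ab: "a < n" "b < n"
  shows "H n j (\<lambda>i. mmult n (mmult n S (X i)) T) a b = ract sc n (lact sc n S (H n j X)) T a b"
proof -
  define K where "K = Bd n"
  define Z where "Z = (\<lambda>i. mmult n (mmult n S (X i)) T)"
  have SZ: "scaleX t Z = (\<lambda>i. mmult n (mmult n S (scaleX t X i)) T)" for t
    by (simp add: fun_eq_iff mmult_def scaleX_def Z_def sum_distrib_left sum_distrib_right ac_simps)
  show ?thesis
  proof (cases "j \<le> K")
    case True
    show ?thesis unfolding Z_def[symmetric]
    proof (rule vpoly_eq[where K=K, OF _ True])
      fix t :: 'k assume "t \<noteq> 0"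
      have "(\<Sum>j\<le>K. sc (t ^ j) (H n j Z a b)) = f n (scaleX t Z) a b"
        using f_scale[OF ab, of K t Z] by (simp add: K_def)
      also have "\<dots> = ract sc n (lact sc n S (f n (scaleX t X))) T a b"
        unfolding SZ by (rule f_sim[OF ST ab])
      also have "\<dots> = (\<Sum>j\<le>K. sc (t ^ j) (ract sc n (lact sc n S (H n j X)) T a b))"
        by (rule ract_lact_lin) (simp add: f_scale K_def)
      finally show "(\<Sum>j\<le>K. sc (t ^ j) (H n j Z a b)) = (\<Sum>j\<le>K. sc (t ^ j) (ract sc n (lact sc n S (H n j X)) T a b))" .
    qed
  next
    case False
    have "H n j Z a b = 0" using H_zero[OF ab] False by (simp add: K_def)
    moreover have "ract sc n (lact sc n S (H n j X)) T a b = 0"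
      unfolding ract_def lact_def using H_zero False by (simp add: K_def)
    ultimately show ?thesis unfolding Z_def by simp
  qed
qed

lemma H_nc: "nc_function sc d (\<lambda>n. H n j)"
  unfolding nc_function_def
proof (intro conjI allI impI)
  fix n m :: nat and X Y a b assume "a < n + m" "b < n + m"
  thus "H (n+m) j (\<lambda>i. blockdiag n (X i) (Y i)) a b = blockdiag n (H n j X) (H m j Y) a b"
    by (rule H_dsum)
next
  fix n :: nat and S T :: "nat \<Rightarrow> nat \<Rightarrow> 'k" and X a b assume "minv n S T" "a < n" "b < n"
  thus "H n j (\<lambda>i. mmult n (mmult n S (X i)) T) a b = ract sc n (lact sc n S (H n j X)) T a b"
    by (rule H_sim)
qed

lemma H_poly: "\<exists>c. \<forall>n X a b. a < n \<longrightarrow> b < n \<longrightarrow> H n j X a b = (\<Sum>w\<in>words d j. sc (matword n X w a b) (c w))"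
proof -
  interpret J: NCHJP sc d "\<lambda>n. H n j" j
  proof unfold_locales
    show "nc_function sc d (\<lambda>n. H n j)" by (rule H_nc)
  next
    fix n :: nat and X X' :: "nat \<Rightarrow> nat \<Rightarrow> nat \<Rightarrow> 'k" and a b :: nat
    assume "\<And>i a b. i < d \<Longrightarrow> a < n \<Longrightarrow> b < n \<Longrightarrow> X i a b = X' i a b" "a < n" "b < n"
    thus "H n j X a b = H n j X' a b" by (rule H_loc)
  next
    fix n a b :: nat and t :: 'k and X
    show "H n j (scaleX t X) a b = sc (t ^ j) (H n j X a b)" by (rule H_hom)
  next
    fix n a b :: nat and X0 X1 :: "nat \<Rightarrow> nat \<Rightarrow> nat \<Rightarrow> 'k"
    show "\<exists>K w. \<forall>s. H n j (\<lambda>i c c'. X0 i c c' + s * X1 i c c') a b = (\<Sum>k\<le>K. sc (s ^ k) (w k))"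
      by (rule H_pol)
  qed
  show ?thesis using J.main_hom by blast
qed

definition cf :: "nat \<Rightarrow> nat list \<Rightarrow> 'n" where
  "cf j = (SOME c. \<forall>n X a b. a < n \<longrightarrow> b < n \<longrightarrow> H n j X a b = (\<Sum>w\<in>words d j. sc (matword n X w a b) (c w)))"

definition fs :: "nat \<Rightarrow> nat list \<Rightarrow> 'n" where
  "fs j w = (if w \<in> words d j then cf j w else 0)"

lemma H_nceval: "a < n \<Longrightarrow> b < n \<Longrightarrow> H n j X a b = nceval sc d j n (fs j) X a b"
proof -
  assume ab: "a < n" "b < n"
  have "\<forall>n X a b. a < n \<longrightarrow> b < n \<longrightarrow> H n j X a b = (\<Sum>w\<in>words d j. sc (matword n X w a b) (cf j w))"
    unfolding cf_def by (rule someI_ex[OF H_poly])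
  hence "H n j X a b = (\<Sum>w\<in>words d j. sc (matword n X w a b) (cf j w))" using ab by blast
  also have "\<dots> = nceval sc d j n (fs j) X a b"
    unfolding nceval_def fs_def by (intro sum.cong refl) simp
  finally show ?thesis .
qed

lemma fs_hom: "hom_ncpoly d j (fs j)"
  by (simp add: hom_ncpoly_def fs_def)

lemma fs_vanish: "(case L n of None \<Rightarrow> True | Some D \<Rightarrow> D < j) \<Longrightarrow> nc_vanishes sc d j n (fs j)"
proof -
  assume c: "case L n of None \<Rightarrow> True | Some D \<Rightarrow> D < j"
  show ?thesis unfolding nc_vanishes_def
  proof (intro allI impI)
    fix X a b assume ab: "a < n" "b < n"
    show "nceval sc d j n (fs j) X a b = 0"
    proof (cases "L n")
      case None
      hence "H n j X a b = 0" unfolding H_def hpart_def using Qnone[OF None ab] by simp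
      thus ?thesis using H_nceval[OF ab] by simp
    next
      case (Some D)
      hence "Bd n < j" using c by (simp add: Bd_def)
      thus ?thesis using H_nceval[OF ab] H_zero[OF ab] by simp
    qed
  qed
qed

lemma fs_nonvanish: "L n = Some D \<Longrightarrow> \<not> nc_vanishes sc d D n (fs D)"
  unfolding nc_vanishes_def using H_nonzero H_nceval by metis

lemma fs_sum: "a < n \<Longrightarrow> b < n \<Longrightarrow> f n X a b =
   (case L n of None \<Rightarrow> 0 | Some D \<Rightarrow> \<Sum>j\<le>D. nceval sc d j n (fs j) X a b)"
proof -
  assume ab: "a < n" "b < n"
  show ?thesis
  proof (cases "L n")
    case None
    thus ?thesis using f_peval[OF ab] Qnone[OF None ab] by (simp add: peval_def)
  next
    case (Some D)
    hence "f n X a b = (\<Sum>j\<le>D. H n j X a b)" using f_H[OF ab] by (simp add: Bd_def)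
    thus ?thesis using Some H_nceval[OF ab] by simp
  qed
qed

end

definition Xsh :: "nat \<Rightarrow> nat list \<Rightarrow> nat \<Rightarrow> nat \<Rightarrow> nat \<Rightarrow> 'k::{zero,one}" where
  "Xsh j w i a b = (if b = Suc a \<and> a < j \<and> w ! a = i then 1 else 0)"

lemma matword_Xsh:
  assumes w: "length w = j" and ab: "a < Suc j" "b < Suc j"
  shows "matword (Suc j) (Xsh j w) v a b = (if b = a + length v \<and> v = take (length v) (drop a w) then 1 else (0::'k::comm_semiring_1))"
  using ab(1)
proof (induction v arbitrary: a)
  case Nil
  then show ?case using ab by (simp add: matword_Nil idm_def)
next
  case (Cons i v)
  have "(matword (Suc j) (Xsh j w) (i # v) a b :: 'k) = (\<Sum>c<Suc j. if c = Suc a then (if a < j \<and> w ! a = i then matword (Suc j) (Xsh j w) v (Suc a) b else 0) else 0)"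
    unfolding matword_Cons mmult_def by (intro sum.cong refl) (auto simp: Xsh_def)
  also have "\<dots> = (if a < j \<and> w ! a = i then matword (Suc j) (Xsh j w) v (Suc a) b else 0)"
    by (simp add: sum.delta del: sum.lessThan_Suc)
  also have "\<dots> = (if b = a + length (i # v) \<and> i # v = take (length (i # v)) (drop a w) then 1 else 0)"
  proof (cases "a < j")
    case True
    have dr: "drop a w = w ! a # drop (Suc a) w" using True w by (simp add: Cons_nth_drop_Suc)
    show ?thesis using True Cons.IH[of "Suc a"] by (auto simp: dr)
  next
    case False
    hence "drop a w = []" using w by simp
    thus ?thesis using False by simp
  qed
  finally show ?case .
qed

context NC begin

lemma nceval_scale: "nceval sc d j n p (scaleX t X) a b = sc (t ^ j) (nceval sc d j n p X a b)"
  unfolding nceval_def scale_sum_right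
  by (intro sum.cong refl) (simp add: matword_scale words_def)

lemma nc_coeff:
  assumes hp: "hom_ncpoly d j p" and hq: "hom_ncpoly d j q"
    and eq: "\<And>n X a b. a < n \<Longrightarrow> b < n \<Longrightarrow> nceval sc d j n p X a b = nceval sc d j n q X a b"
  shows "p = q"
proof
  fix w
  show "p w = q w"
  proof (cases "w \<in> words d j")
    case False
    thus ?thesis using hp hq by (simp add: hom_ncpoly_def)
  next
    case True
    hence w: "length w = j" by (simp add: words_def)
    have ev: "nceval sc d j (Suc j) r (Xsh j w) 0 j = r w" for r
    proof -
      have "nceval sc d j (Suc j) r (Xsh j w) 0 j = (\<Sum>v\<in>words d j. if v = w then r w else 0)"
        unfolding nceval_def
      proof (intro sum.cong refl)
        fix v assume "v \<in> words d j"
        hence v: "length v = j" by (simp add: words_def)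
        have M: "matword (Suc j) (Xsh j w) v 0 j = (if v = w then 1 else (0::'k))"
        proof (cases "v = w")
          case True thus ?thesis using matword_Xsh[OF w, of 0 j w] w by simp
        next
          case False
          hence "v \<noteq> take j w" using w by simp
          thus ?thesis using matword_Xsh[OF w, of 0 j v] v False by simp
        qed
        show "sc (matword (Suc j) (Xsh j w) v 0 j) (r v) = (if v = w then r w else 0)"
          by (simp add: M)
      qed
      also have "\<dots> = r w" using True finite_words by (simp add: sum.delta)
      finally show ?thesis .
    qed
    show ?thesis using eq[of 0 "Suc j" j "Xsh j w"] ev[of p] ev[of q] by simp
  qed
qed

end

context NCF begin

lemma uniq_eval:
  assumes gv: "\<And>j. (case L n of None \<Rightarrow> True | Some D \<Rightarrow> D < j) \<Longrightarrow> nc_vanishes sc d j n (gs j)"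
    and gs: "\<And>X. f n X a b = (case L n of None \<Rightarrow> 0 | Some D \<Rightarrow> (\<Sum>i\<le>D. nceval sc d i n (gs i) X a b))"
    and ab: "a < n" "b < n"
  shows "nceval sc d j n (gs j) X a b = nceval sc d j n (fs j) X a b"
proof -
  show ?thesis
  proof (cases "L n")
    case None
    hence "nc_vanishes sc d j n (gs j)" "nc_vanishes sc d j n (fs j)" using gv fs_vanish by simp_all
    thus ?thesis using ab unfolding nc_vanishes_def by simp
  next
    case (Some D)
    show ?thesis
    proof (cases "D < j")
      case True
      hence "nc_vanishes sc d j n (gs j)" "nc_vanishes sc d j n (fs j)" using gv fs_vanish Some by simp_all
      thus ?thesis using ab unfolding nc_vanishes_def by simp
    next
      case False
      show ?thesis
      proof (rule vpoly_eq[where K=D and v="\<lambda>j. nceval sc d j n (gs j) X a b" and w="\<lambda>j. nceval sc d j n (fs j) X a b" and j=j])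
        fix t :: 'k assume "t \<noteq> 0"
        have "(\<Sum>j\<le>D. sc (t ^ j) (nceval sc d j n (gs j) X a b)) = f n (scaleX t X) a b"
          using gs[of "scaleX t X"] Some by (simp add: nceval_scale)
        also have "\<dots> = (\<Sum>j\<le>D. sc (t ^ j) (nceval sc d j n (fs j) X a b))"
          using fs_sum[OF ab, of "scaleX t X"] Some by (simp add: nceval_scale)
        finally show "(\<Sum>j\<le>D. sc (t ^ j) (nceval sc d j n (gs j) X a b)) = (\<Sum>j\<le>D. sc (t ^ j) (nceval sc d j n (fs j) X a b))" .
      qed (use False in simp)
    qed
  qed
qed

end

theorem theorem6p4:
  fixes sc :: "'k::field \<Rightarrow> 'n::ab_group_add \<Rightarrow> 'n"
    and d :: nat
    and f :: "nat \<Rightarrow> (nat \<Rightarrow> nat \<Rightarrow> nat \<Rightarrow> 'k) \<Rightarrow> nat \<Rightarrow> nat \<Rightarrow> 'n"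
    and L :: "nat \<Rightarrow> nat option"
  assumes "infinite (UNIV :: 'k set)"
    and "Vector_Spaces.vector_space sc"
    and "nc_function sc d f"
    and "\<forall>n. is_poly_fun_deg sc d n (f n) (L n)"
  shows "\<exists>!fs :: nat \<Rightarrow> nat list \<Rightarrow> 'n.
           (\<forall>j. hom_ncpoly d j (fs j)) \<and>
           (\<forall>n. (\<forall>j. (case L n of None \<Rightarrow> True | Some D \<Rightarrow> D < j) \<longrightarrow> nc_vanishes sc d j n (fs j)) \<and>
                (\<forall>D. L n = Some D \<longrightarrow> \<not> nc_vanishes sc d D n (fs D)) \<and>
                (\<forall>X. \<forall>a<n. \<forall>b<n. f n X a b =
                   (case L n of None \<Rightarrow> 0 | Some D \<Rightarrow> \<Sum>j\<le>D. nceval sc d j n (fs j) X a b)))"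
proof -
  interpret N: NCF sc d f L
  proof -
    interpret V: vector_space sc by fact
    show "NCF sc d f L" by unfold_locales fact+
  qed
  show ?thesis
  proof (rule ex1I[where a = N.fs], intro conjI allI impI)
    fix j show "hom_ncpoly d j (N.fs j)" by (rule N.fs_hom)
  next
    fix n j :: nat assume "case L n of None \<Rightarrow> True | Some D \<Rightarrow> D < j"
    thus "nc_vanishes sc d j n (N.fs j)" by (rule N.fs_vanish)
  next
    fix n D :: nat assume "L n = Some D"
    thus "\<not> nc_vanishes sc d D n (N.fs D)" by (rule N.fs_nonvanish)
  next
    fix n a b :: nat and X assume "a < n" "b < n"
    thus "f n X a b = (case L n of None \<Rightarrow> 0 | Some D \<Rightarrow> \<Sum>j\<le>D. nceval sc d j n (N.fs j) X a b)"
      by (rule N.fs_sum)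
  next
    fix gs :: "nat \<Rightarrow> nat list \<Rightarrow> 'n"
    assume P: "(\<forall>j. hom_ncpoly d j (gs j)) \<and>
           (\<forall>n. (\<forall>j. (case L n of None \<Rightarrow> True | Some D \<Rightarrow> D < j) \<longrightarrow> nc_vanishes sc d j n (gs j)) \<and>
                (\<forall>D. L n = Some D \<longrightarrow> \<not> nc_vanishes sc d D n (gs D)) \<and>
                (\<forall>X. \<forall>a<n. \<forall>b<n. f n X a b =
                   (case L n of None \<Rightarrow> 0 | Some D \<Rightarrow> \<Sum>j\<le>D. nceval sc d j n (gs j) X a b)))"
    show "gs = N.fs"
    proof
      fix j
      show "gs j = N.fs j"
      proof (rule N.nc_coeff)
        show "hom_ncpoly d j (gs j)" using P by blast
        show "hom_ncpoly d j (N.fs j)" by (rule N.fs_hom)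
        fix n a b :: nat and X assume ab: "a < n" "b < n"
        have P2: "\<forall>n. (\<forall>j. (case L n of None \<Rightarrow> True | Some D \<Rightarrow> D < j) \<longrightarrow> nc_vanishes sc d j n (gs j)) \<and>
                (\<forall>D. L n = Some D \<longrightarrow> \<not> nc_vanishes sc d D n (gs D)) \<and>
                (\<forall>X. \<forall>a<n. \<forall>b<n. f n X a b =
                   (case L n of None \<Rightarrow> 0 | Some D \<Rightarrow> \<Sum>j\<le>D. nceval sc d j n (gs j) X a b))"
          using P by (rule conjunct2)
        have Pn: "(\<forall>j. (case L n of None \<Rightarrow> True | Some D \<Rightarrow> D < j) \<longrightarrow> nc_vanishes sc d j n (gs j)) \<and>
                (\<forall>D. L n = Some D \<longrightarrow> \<not> nc_vanishes sc d D n (gs D)) \<and>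
                (\<forall>X. \<forall>a<n. \<forall>b<n. f n X a b =
                   (case L n of None \<Rightarrow> 0 | Some D \<Rightarrow> \<Sum>j\<le>D. nceval sc d j n (gs j) X a b))"
          using P2 by (rule spec)
        show "nceval sc d j n (gs j) X a b = nceval sc d j n (N.fs j) X a b"
        proof (rule N.uniq_eval[OF _ _ ab])
          fix i assume "case L n of None \<Rightarrow> True | Some D \<Rightarrow> D < i"
          thus "nc_vanishes sc d i n (gs i)" using Pn[THEN conjunct1] by blast
        next
          fix X
          show "f n X a b = (case L n of None \<Rightarrow> 0 | Some D \<Rightarrow> (\<Sum>i\<le>D. nceval sc d i n (gs i) X a b))"
            using Pn[THEN conjunct2, THEN conjunct2] ab by blast
        qed
      qed
    qed
  qed
qed

end
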